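(* In the setting described in the context, the matrix $\mathbf F$ is invertible with $$\mathbf F^{-1}=\mathbf N^{-1}\mathbf F^T\boldsymbol\Delta,\qquad \det(\mathbf F)=(-1)^{\frac12\textsc{m}(\textsc{m}+1)}\prod_{0\le l\le\textsc{m}}\Big(\frac{N_l}{\Delta_l}\Big)^{1/2},$$ where $\mathbf N=\mathrm{diag}(N_0,\dots,N_{\textsc{m}})$ and $\boldsymbol\Delta=\mathrm{diag}(\Delta_0,\dots,\Delta_{\textsc{m}})$.
   Context: Fix $0<p<1$ and the Jacobi theta functions $\theta_1(z)=2p^{1/4}\sin z\prod_{n\ge1}(1-p^{2n})(1-2p^{2n}\cos 2z+p^{4n})$, $\theta_2(z)=2p^{1/4}\cos z\prod_{n\ge1}(1-p^{2n})(1+2p^{2n}\cos 2z+p^{4n})$, $\theta_3(z)=\prod_{n\ge1}(1-p^{2n})(1+2p^{2n-1}\cos 2z+p^{4n-2})$, $\theta_4(z)=\prod_{n\ge1}(1-p^{2n})(1-2p^{2n-1}\cos 2z+p^{4n-2})$. For $\alpha>0$ set $[z]_1=\theta_1(\frac{\alpha}{2}z)/(\frac{\alpha}{2}\theta_1'(0))$, $[z]_r=\theta_r(\frac{\alpha}{2}z)/\theta_r(0)$ ($r=2,3,4$). Parameters: real $u_1,\dots,u_4,v_1,\dots,v_4$ with $u_r>0$, $|v_r|<u_r+\frac12$ for $r=1,2$; $\textsc{m}\in\mathbb{N}$; $\alpha=\pi/(u_1+u_2+\textsc{m})$; a real $u$ with $u,u+1\notin\frac{2\pi}{\alpha}\mathbb{Z}$.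 Let $\pi_1=\mathrm{id}$, $\pi_2=(12)(34)$, $\pi_3=(13)(24)$, $\pi_4=(14)(23)$ in $S_4$, and $c_r=\frac{2}{[u]_1[u+1]_1}\prod_{s=1}^4[u_{\pi_r(s)}-\frac12]_s[v_{\pi_r(s)}]_s$. For integers $k$ define $a_k=\prod_{r=1}^4\frac{[u_1-u_r+k]_r[u_1-v_r-\frac12+k]_r}{[u_1+k]_r[u_1-\frac12+k]_r}$, $\tilde a_k=\prod_{r=1}^4\frac{[u_2-u_{\pi_2(r)}+k]_r[u_2-v_{\pi_2(r)}-\frac12+k]_r}{[u_2+k]_r[u_2-\frac12+k]_r}$, $b_k=\sum_{r=1}^4c_r\frac{[u_1+k+\frac12+u]_r[u_1+k-\frac12-u]_r}{[u_1+k+\frac12]_r[u_1+k-\frac12]_r}$ (the numbers $a_k,\tilde a_k$, $1\le k\le\textsc{m}$, are positive). Let $\mathbf H$ be the $(\textsc{m}+1)\times(\textsc{m}+1)$ tridiagonal matrix with rows/columns indexed by $0,\dots,\textsc{m}$, $H_{k,k}=b_k$, $H_{k,k-1}=a_k$ ($1\le k\le\textsc{m}$), $H_{k,k+1}=\tilde a_{\textsc{m}-k}$ ($0\le k\le\textsc{m}-1$), all other entries $0$; its eigenvalues are real and simple, denoted $\textsc{e}_0>\textsc{e}_1>\cdots>\textsc{e}_{\textsc{m}}$. The monic elliptic Racah polynomials are $p_0(\textsc{e})=1$ and, for $1\le k\le\textsc{m}+1$, $p_k(\textsc{e})$ = the determinant of the upper-left $k\times k$ submatrix of $\textsc{e}\mathbf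 I_{\textsc{m}+1}-\mathbf H$; $f_k(\textsc{e})=p_k(\textsc{e})\prod_{0\le j<k}\tilde a_{\textsc{m}-j}^{-1}$. The elliptic Racah matrix $\mathbf F$ is the $(\textsc{m}+1)\times(\textsc{m}+1)$ matrix whose $j$-th column ($j=0,\dots,\textsc{m}$) is $(f_0(\textsc{e}_j),\dots,f_{\textsc{m}}(\textsc{e}_j))^T$, i.e. $F_{k,j}=f_k(\textsc{e}_j)$. Weights: $\Delta_k=\prod_{1\le l\le k}\tilde a_{\textsc{m}+1-l}/a_l$. Norms: $N_j=\frac{1}{|\epsilon_j|\,a_1\cdots a_{\textsc{m}}}\prod_{0\le l\le\textsc{m},\,l\ne j}|\textsc{e}_j-\textsc{e}_l|$ with $\epsilon_j=\tilde p_{\textsc{m}}(\textsc{e}_j)/(a_1\cdots a_{\textsc{m}})$, where $\tilde p_{\textsc{m}}$ denotes $p_{\textsc{m}}$ computed with parameters interchanged as $(u_1,v_1)\leftrightarrow(u_2,v_2)$, $(u_3,v_3)\leftrightarrow(u_4,v_4)$. *)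

theory Defs
  imports "HOL-Analysis.Infinite_Products" "Jordan_Normal_Form.Char_Poly"
begin

definition theta1 :: "real \<Rightarrow> real \<Rightarrow> real" where
  "theta1 p z = 2 * p powr (1/4) * sin z *
     (\<Prod>n. (1 - p ^ (2 * Suc n)) * (1 - 2 * p ^ (2 * Suc n) * cos (2 * z) + p ^ (4 * Suc n)))"

definition theta2 :: "real \<Rightarrow> real \<Rightarrow> real" where
  "theta2 p z = 2 * p powr (1/4) * cos z *
     (\<Prod>n. (1 - p ^ (2 * Suc n)) * (1 + 2 * p ^ (2 * Suc n) * cos (2 * z) + p ^ (4 * Suc n)))"

definition theta3 :: "real \<Rightarrow> real \<Rightarrow> real" where
  "theta3 p z =
     (\<Prod>n. (1 - p ^ (2 * Suc n)) * (1 + 2 * p ^ (2 * Suc n - 1) * cos (2 * z) + p ^ (4 * Suc n - 2)))"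

definition theta4 :: "real \<Rightarrow> real \<Rightarrow> real" where
  "theta4 p z =
     (\<Prod>n. (1 - p ^ (2 * Suc n)) * (1 - 2 * p ^ (2 * Suc n - 1) * cos (2 * z) + p ^ (4 * Suc n - 2)))"

definition brk :: "real \<Rightarrow> real \<Rightarrow> nat \<Rightarrow> real \<Rightarrow> real" where
  "brk p \<alpha> r z =
     (if r = 1 then theta1 p (\<alpha> / 2 * z) / (\<alpha> / 2 * deriv (theta1 p) 0)
      else if r = 2 then theta2 p (\<alpha> / 2 * z) / theta2 p 0
      else if r = 3 then theta3 p (\<alpha> / 2 * z) / theta3 p 0
      else theta4 p (\<alpha> / 2 * z) / theta4 p 0)"

definition perm4 :: "nat \<Rightarrow> nat \<Rightarrow> nat" where
  "perm4 r s =
     (if r = 2 then (if s = 1 then 2 else if s = 2 then 1 else if s = 3 then 4 else if s = 4 then 3 else s)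
      else if r = 3 then (if s = 1 then 3 else if s = 3 then 1 else if s = 2 then 4 else if s = 4 then 2 else s)
      else if r = 4 then (if s = 1 then 4 else if s = 4 then 1 else if s = 2 then 3 else if s = 3 then 2 else s)
      else s)"

text \<open>Parameters: nome p, us = (u_1..u_4), vs = (v_1..v_4) (indexed by 1..4), M, spectral parameter u.\<close>

definition alph :: "(nat \<Rightarrow> real) \<Rightarrow> nat \<Rightarrow> real" where
  "alph us M = pi / (us 1 + us 2 + real M)"

definition cr :: "real \<Rightarrow> (nat \<Rightarrow> real) \<Rightarrow> (nat \<Rightarrow> real) \<Rightarrow> nat \<Rightarrow> real \<Rightarrow> nat \<Rightarrow> real" where
  "cr p us vs M u r =
     (let b = brk p (alph us M) in
      2 / (b 1 u * b 1 (u + 1)) *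
      (\<Prod>s\<in>{1..4}. b s (us (perm4 r s) - 1/2) * b s (vs (perm4 r s))))"

definition acoef :: "real \<Rightarrow> (nat \<Rightarrow> real) \<Rightarrow> (nat \<Rightarrow> real) \<Rightarrow> nat \<Rightarrow> nat \<Rightarrow> real" where
  "acoef p us vs M k =
     (let b = brk p (alph us M) in
      \<Prod>r\<in>{1..4}. b r (us 1 - us r + real k) * b r (us 1 - vs r - 1/2 + real k) /
                   (b r (us 1 + real k) * b r (us 1 - 1/2 + real k)))"

definition atcoef :: "real \<Rightarrow> (nat \<Rightarrow> real) \<Rightarrow> (nat \<Rightarrow> real) \<Rightarrow> nat \<Rightarrow> nat \<Rightarrow> real" where
  "atcoef p us vs M k =
     (let b = brk p (alph us M) in
      \<Prod>r\<in>{1..4}. b r (us 2 - us (perm4 2 r) + real k) * b r (us 2 - vs (perm4 2 r) - 1/2 + real k) /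
                   (b r (us 2 + real k) * b r (us 2 - 1/2 + real k)))"

definition bcoef :: "real \<Rightarrow> (nat \<Rightarrow> real) \<Rightarrow> (nat \<Rightarrow> real) \<Rightarrow> nat \<Rightarrow> real \<Rightarrow> nat \<Rightarrow> real" where
  "bcoef p us vs M u k =
     (let b = brk p (alph us M) in
      \<Sum>r\<in>{1..4}. cr p us vs M u r *
         (b r (us 1 + real k + 1/2 + u) * b r (us 1 + real k - 1/2 - u)) /
         (b r (us 1 + real k + 1/2) * b r (us 1 + real k - 1/2)))"

definition Hent :: "real \<Rightarrow> (nat \<Rightarrow> real) \<Rightarrow> (nat \<Rightarrow> real) \<Rightarrow> nat \<Rightarrow> real \<Rightarrow> nat \<Rightarrow> nat \<Rightarrow> real" where
  "Hent p us vs M u i j =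
     (if i = j then bcoef p us vs M u i
      else if i = j + 1 then acoef p us vs M i
      else if j = i + 1 then atcoef p us vs M (M - i)
      else 0)"

definition Hmat :: "real \<Rightarrow> (nat \<Rightarrow> real) \<Rightarrow> (nat \<Rightarrow> real) \<Rightarrow> nat \<Rightarrow> real \<Rightarrow> real mat" where
  "Hmat p us vs M u = mat (M + 1) (M + 1) (\<lambda>(i, j). Hent p us vs M u i j)"

definition ppoly :: "real \<Rightarrow> (nat \<Rightarrow> real) \<Rightarrow> (nat \<Rightarrow> real) \<Rightarrow> nat \<Rightarrow> real \<Rightarrow> nat \<Rightarrow> real \<Rightarrow> real" where
  "ppoly p us vs M u k E =
     det (mat k k (\<lambda>(i, j). (if i = j then E else 0) - Hent p us vs M u i j))"

definition fpoly :: "real \<Rightarrow> (nat \<Rightarrow> real) \<Rightarrow> (nat \<Rightarrow> real) \<Rightarrow> nat \<Rightarrow> real \<Rightarrow> nat \<Rightarrow> real \<Rightarrow> real" where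
  "fpoly p us vs M u k E =
     ppoly p us vs M u k E * (\<Prod>j<k. inverse (atcoef p us vs M (M - j)))"

text \<open>The elliptic Racah matrix, for a given labelling E_0..E_M of the eigenvalues of H.\<close>

definition Fmat :: "real \<Rightarrow> (nat \<Rightarrow> real) \<Rightarrow> (nat \<Rightarrow> real) \<Rightarrow> nat \<Rightarrow> real \<Rightarrow> (nat \<Rightarrow> real) \<Rightarrow> real mat" where
  "Fmat p us vs M u E = mat (M + 1) (M + 1) (\<lambda>(k, j). fpoly p us vs M u k (E j))"

definition Delta :: "real \<Rightarrow> (nat \<Rightarrow> real) \<Rightarrow> (nat \<Rightarrow> real) \<Rightarrow> nat \<Rightarrow> nat \<Rightarrow> real" where
  "Delta p us vs M k = (\<Prod>l\<in>{1..k}. atcoef p us vs M (M + 1 - l) / acoef p us vs M l)"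

text \<open>Interchange (u_1,v_1) with (u_2,v_2) and (u_3,v_3) with (u_4,v_4): precomposition with pi_2.\<close>

definition epsn :: "real \<Rightarrow> (nat \<Rightarrow> real) \<Rightarrow> (nat \<Rightarrow> real) \<Rightarrow> nat \<Rightarrow> real \<Rightarrow> (nat \<Rightarrow> real) \<Rightarrow> nat \<Rightarrow> real" where
  "epsn p us vs M u E j =
     ppoly p (us \<circ> perm4 2) (vs \<circ> perm4 2) M u M (E j) / (\<Prod>l\<in>{1..M}. acoef p us vs M l)"

definition Nrm :: "real \<Rightarrow> (nat \<Rightarrow> real) \<Rightarrow> (nat \<Rightarrow> real) \<Rightarrow> nat \<Rightarrow> real \<Rightarrow> (nat \<Rightarrow> real) \<Rightarrow> nat \<Rightarrow> real" where
  "Nrm p us vs M u E j =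
     1 / (\<bar>epsn p us vs M u E j\<bar> * (\<Prod>l\<in>{1..M}. acoef p us vs M l)) *
     (\<Prod>l\<in>{0..M} - {j}. \<bar>E j - E l\<bar>)"

definition diagm :: "nat \<Rightarrow> (nat \<Rightarrow> real) \<Rightarrow> real mat" where
  "diagm n d = mat n n (\<lambda>(i, j). if i = j then d i else 0)"

end

theory Submission
  imports Defs
begin


definition tdet :: "(nat \<Rightarrow> nat \<Rightarrow> real) \<Rightarrow> nat \<Rightarrow> real \<Rightarrow> real" where
  "tdet T k E = det (mat k k (\<lambda>(i, j). (if i = j then E else 0) - T i j))"

lemma tdet_0: "tdet T 0 E = 1"
  unfolding tdet_def by (simp add: det_dim_zero)

lemma tdet_1: "tdet T 1 E = E - T 0 0"
proof -
  define A where "A = mat 1 1 (\<lambda>(i, j). (if i = j then E else 0) - T i j)"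
  have A: "A \<in> carrier_mat 1 1" unfolding A_def by simp
  have "det A = (\<Sum>j<1. A $$ (0,j) * cofactor A 0 j)"
    using laplace_expansion_row[OF A, of 0] by simp
  also have "\<dots> = E - T 0 0"
  proof -
    have "A $$ (0,0) = E - T 0 0" by (simp add: A_def)
    moreover have "cofactor A 0 0 = 1"
      unfolding cofactor_def using det_dim_zero[OF mat_delete_carrier[OF A, simplified]] by simp
    ultimately show ?thesis by simp
  qed
  finally show ?thesis unfolding tdet_def A_def .
qed

lemma tdet_rec:
  assumes tri: "\<And>i j. Suc i < j \<Longrightarrow> T i j = 0 \<and> T j i = 0"
  shows "tdet T (Suc (Suc k)) E = (E - T (Suc k) (Suc k)) * tdet T (Suc k) E
           - T (Suc k) k * T k (Suc k) * tdet T k E"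
proof -
  define f where "f = (\<lambda>(i, j). (if i = j then E else 0) - T i j)"
  define n where "n = Suc k"
  define A where "A = mat (Suc n) (Suc n) f"
  have A: "A \<in> carrier_mat (Suc n) (Suc n)" unfolding A_def by simp
  have lap: "det A = (\<Sum>j<Suc n. A $$ (n,j) * cofactor A n j)"
    using laplace_expansion_row[OF A, of n] by simp
  have z: "(\<Sum>j<k. A $$ (n,j) * cofactor A n j) = 0"
    by (rule sum.neutral) (auto simp: A_def f_def n_def tri)
  have d1: "mat_delete A n n = mat n n f"
    by (rule eq_matI) (auto simp: A_def mat_delete_def)
  define B where "B = mat_delete A n k"
  have B: "B \<in> carrier_mat n n" unfolding B_def A_def by (simp add: mat_delete_def)
  have Bent: "\<And>i j. i < n \<Longrightarrow> j < n \<Longrightarrow> B $$ (i,j) = f (i, if j < k then j else Suc j)"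
    unfolding B_def A_def mat_delete_def n_def by auto
  have lapB: "det B = (\<Sum>i<n. B $$ (i,k) * cofactor B i k)"
    using laplace_expansion_column[OF B, of k] by (simp add: n_def)
  have zB: "(\<Sum>i<k. B $$ (i,k) * cofactor B i k) = 0"
    by (rule sum.neutral) (auto simp: Bent n_def f_def tri)
  have dB: "mat_delete B k k = mat k k f"
    by (rule eq_matI) (auto simp: B_def A_def mat_delete_def n_def)
  have detB: "det B = - T k n * det (mat k k f)"
    using lapB zB by (simp add: n_def Bent f_def cofactor_def dB)
  have "det A = A $$ (n,k) * cofactor A n k + A $$ (n,n) * cofactor A n n"
    using lap z by (simp add: n_def)
  also have "\<dots> = (- T n k) * (- det B) + (E - T n n) * det (mat n n f)"
  proof -
    have "A $$ (n,k) = - T n k" "A $$ (n,n) = E - T n n" by (auto simp: A_def f_def n_def)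
    moreover have "cofactor A n k = - det B" "cofactor A n n = det (mat n n f)"
    proof -
      have "(-1::real)^(n+k) = -1" "(-1::real)^(n+n) = 1" by (simp_all add: n_def)
      then show "cofactor A n k = - det B" "cofactor A n n = det (mat n n f)"
        unfolding cofactor_def B_def d1 by simp_all
    qed
    ultimately show ?thesis by simp
  qed
  finally show ?thesis
    unfolding tdet_def using detB by (simp add: A_def f_def n_def algebra_simps)
qed



lemma prod_lin_dvd:
  fixes x :: "nat \<Rightarrow> real" and R :: "real poly"
  assumes "finite S" "inj_on x S" "\<forall>j\<in>S. poly R (x j) = 0"
  shows "(\<Prod>j\<in>S. [:- x j, 1:]) dvd R"
  using assms
proof (induction S rule: finite_induct)
  case empty then show ?case by simp
next
  case (insert a S)
  then have "(\<Prod>j\<in>S. [:- x j, 1:]) dvd R" by auto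
  then obtain q where q: "R = (\<Prod>j\<in>S. [:- x j, 1:]) * q" by (auto elim: dvdE)
  have "poly (\<Prod>j\<in>S. [:- x j, 1:]) (x a) \<noteq> 0"
    using insert.prems insert.hyps by (auto simp: poly_prod inj_on_def)
  moreover have "poly R (x a) = 0" using insert.prems by auto
  ultimately have "poly q (x a) = 0" using q by simp
  then obtain q' where "q = [:- x a, 1:] * q'" using poly_eq_0_iff_dvd by (metis dvdE)
  moreover have "(\<Prod>j\<in>insert a S. [:- x j, 1:]) = [:- x a, 1:] * (\<Prod>j\<in>S. [:- x j, 1:])"
    using insert.hyps by simp
  ultimately have "R = (\<Prod>j\<in>insert a S. [:- x j, 1:]) * q'"
    using q by (simp only: ac_simps)
  then show ?case by simp
qed

lemma degree_prod_lin: "degree (\<Prod>j<n. [:- (x j::real), 1:]) = n"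
  by (simp add: degree_prod_eq_sum_degree)

lemma lead_prod_lin: "coeff (\<Prod>j<n. [:- (x j::real), 1:]) n = 1"
proof -
  have "coeff (\<Prod>j<n. [:- (x j::real), 1:]) n = lead_coeff (\<Prod>j<n. [:- (x j::real), 1:])"
    using degree_prod_lin by metis
  also have "\<dots> = 1" by (simp add: lead_coeff_prod)
  finally show ?thesis .
qed

lemma poly_roots_prod:
  fixes R :: "real poly" and x :: "nat \<Rightarrow> real"
  assumes deg: "degree R \<le> n" and inj: "inj_on x {..<n}" and roots: "\<forall>j<n. poly R (x j) = 0"
  shows "R = Polynomial.smult (coeff R n) (\<Prod>j<n. [:- x j, 1:])"
proof -
  let ?P = "\<Prod>j<n. [:- x j, 1:]"
  have "?P dvd R" by (rule prod_lin_dvd) (use inj roots in auto)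
  then obtain q where q: "R = ?P * q" by (auto elim: dvdE)
  show ?thesis
  proof (cases "q = 0")
    case True then show ?thesis using q by simp
  next
    case False
    have P0: "?P \<noteq> 0"
      by (metis lead_prod_lin zero_neq_one coeff_0)
    have "degree R = n + degree q" using q degree_mult_eq[OF P0 False] degree_prod_lin by simp
    then have "degree q = 0" using deg by simp
    then obtain c where c: "q = [:c:]" by (metis degree_eq_zeroE)
    have R1: "R = Polynomial.smult c ?P" using q c by simp
    have "coeff R n = c * coeff ?P n" using R1 by simp
    moreover have "coeff ?P n = 1" by (rule lead_prod_lin)
    ultimately show ?thesis using R1 by simp
  qed
qed

lemma mat_delete_eq_cols:
  assumes "\<And>i j. i < m \<Longrightarrow> j < n \<Longrightarrow> j \<noteq> c \<Longrightarrow> f (i, j) = g (i, j)" "c < n"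
  shows "mat_delete (mat m n f) r c = mat_delete (mat m n g) r c"
  by (rule eq_matI) (auto simp: mat_delete_def intro!: assms)

lemma vandermonde_gen:
  fixes Q :: "nat \<Rightarrow> real poly" and x :: "nat \<Rightarrow> real"
  assumes degQ: "\<And>k. degree (Q k) \<le> k" and inj: "inj_on x {..<n}"
  shows "det (mat n n (\<lambda>(k, j). poly (Q k) (x j))) =
           (\<Prod>k<n. coeff (Q k) k) * (\<Prod>l<n. \<Prod>j<l. (x l - x j))"
  using inj
proof (induction n)
  case 0
  then show ?case by (simp add: det_dim_zero)
next
  case (Suc n)
  define A where "A = (\<lambda>y. mat (Suc n) (Suc n) (\<lambda>(k, j). poly (Q k) (if j = n then y else x j)))"
  have A: "\<And>y. A y \<in> carrier_mat (Suc n) (Suc n)" unfolding A_def by simp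
  define cof where "cof = (\<lambda>i. cofactor (A 0) i n)"
  have cofeq: "\<And>y i. cofactor (A y) i n = cof i"
    unfolding cof_def cofactor_def A_def
    by (subst mat_delete_eq_cols[where g = "\<lambda>(k, j). poly (Q k) (if j = n then 0 else x j)"]) auto
  define R where "R = (\<Sum>i<Suc n. Polynomial.smult (cof i) (Q i))"
  have detA: "det (A y) = poly R y" for y
  proof -
    have "det (A y) = (\<Sum>i<Suc n. A y $$ (i,n) * cofactor (A y) i n)"
      using laplace_expansion_column[OF A, of n] by simp
    also have "\<dots> = (\<Sum>i<Suc n. poly (Q i) y * cof i)"
    proof (rule sum.cong)
      fix i assume "i \<in> {..<Suc n}"
      then have "A y $$ (i,n) = poly (Q i) y" by (simp add: A_def)
      then show "A y $$ (i,n) * cofactor (A y) i n = poly (Q i) y * cof i" by (simp add: cofeq)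
    qed simp
    finally show ?thesis by (simp add: R_def poly_sum mult_ac)
  qed
  have degR: "degree R \<le> n"
    unfolding R_def by (rule degree_sum_le) (auto intro: order_trans[OF degree_smult_le] order_trans[OF degQ])
  have coeffR: "coeff R n = cof n * coeff (Q n) n"
  proof -
    have "coeff R n = (\<Sum>i<Suc n. cof i * coeff (Q i) n)" by (simp add: R_def coeff_sum)
    also have "\<dots> = cof n * coeff (Q n) n"
    proof -
      have "(\<Sum>i<n. cof i * coeff (Q i) n) = 0"
        by (rule sum.neutral) (auto intro!: coeff_eq_0 order.strict_trans1[OF degQ])
      then show ?thesis by simp
    qed
    finally show ?thesis .
  qed
  have cofn: "cof n = det (mat n n (\<lambda>(k, j). poly (Q k) (x j)))"
  proof -
    have "mat_delete (A 0) n n = mat n n (\<lambda>(k, j). poly (Q k) (x j))"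
      by (rule eq_matI) (auto simp: A_def mat_delete_def)
    then show ?thesis unfolding cof_def cofactor_def by simp
  qed
  have roots: "\<forall>j<n. poly R (x j) = 0"
  proof (intro allI impI)
    fix j assume j: "j < n"
    have "det (A (x j)) = 0"
      by (rule det_identical_columns[OF A, of j n]) (use j in \<open>auto simp: A_def\<close>)
    then show "poly R (x j) = 0" using detA by simp
  qed
  have inj': "inj_on x {..<n}" using Suc.prems by (auto simp: inj_on_def)
  have Rprod: "R = Polynomial.smult (coeff R n) (\<Prod>j<n. [:- x j, 1:])"
    by (rule poly_roots_prod[OF degR inj' roots])
  have "A (x n) = mat (Suc n) (Suc n) (\<lambda>(k, j). poly (Q k) (x j))"
    unfolding A_def by (rule eq_matI) auto
  then have "det (mat (Suc n) (Suc n) (\<lambda>(k, j). poly (Q k) (x j))) = poly R (x n)"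
    using detA by metis
  also have "\<dots> = coeff R n * (\<Prod>j<n. (x n - x j))"
    by (subst Rprod) (simp add: poly_prod)
  also have "\<dots> = (\<Prod>k<Suc n. coeff (Q k) k) * (\<Prod>l<Suc n. \<Prod>j<l. (x l - x j))"
    using coeffR cofn Suc.IH[OF inj'] by (simp add: mult_ac)
  finally show ?case .
qed



definition ff :: "(nat \<Rightarrow> nat \<Rightarrow> real) \<Rightarrow> nat \<Rightarrow> real \<Rightarrow> real" where
  "ff T k E = tdet T k E * (\<Prod>j<k. inverse (T j (Suc j)))"

definition rr :: "(nat \<Rightarrow> nat \<Rightarrow> real) \<Rightarrow> nat \<Rightarrow> real \<Rightarrow> real" where
  "rr T k E = (E - T k k) * ff T k E - (if k = 0 then 0 else T k (k - 1) * ff T (k - 1) E)"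

definition Dl :: "(nat \<Rightarrow> nat \<Rightarrow> real) \<Rightarrow> nat \<Rightarrow> real" where
  "Dl T k = (\<Prod>l\<in>{1..k}. T (l - 1) l / T l (l - 1))"

locale jac =
  fixes T :: "nat \<Rightarrow> nat \<Rightarrow> real" and M :: nat
  assumes tri: "\<And>i j. Suc i < j \<Longrightarrow> T i j = 0 \<and> T j i = 0"
    and lo_pos: "\<And>k. k < M \<Longrightarrow> T (Suc k) k > 0"
    and up_pos: "\<And>k. k < M \<Longrightarrow> T k (Suc k) > 0"
begin

lemma ff_0[simp]: "ff T 0 E = 1"
  by (simp add: ff_def tdet_0)

lemma rr_tdet: "k \<le> M \<Longrightarrow> rr T k E = tdet T (Suc k) E * (\<Prod>j<k. inverse (T j (Suc j)))"
proof (cases k)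
  case 0 then show ?thesis using tdet_1[of T E] by (simp add: rr_def)
next
  case (Suc m)
  assume "k \<le> M"
  then have nz: "T m (Suc m) \<noteq> 0" using up_pos[of m] Suc by auto
  show ?thesis
    using nz unfolding Suc rr_def ff_def
    by (simp add: tdet_rec[OF tri] algebra_simps)
qed

lemma rr_lt: "k < M \<Longrightarrow> rr T k E = T k (Suc k) * ff T (Suc k) E"
proof -
  assume k: "k < M"
  then have nz: "T k (Suc k) \<noteq> 0" using up_pos by (metis less_irrefl)
  show ?thesis using rr_tdet[of k] k nz by (simp add: ff_def)
qed

lemma Dl_0[simp]: "Dl T 0 = 1" by (simp add: Dl_def)

lemma Dl_Suc: "Dl T (Suc k) = Dl T k * (T k (Suc k) / T (Suc k) k)"
  by (simp add: Dl_def prod.cl_ivl_Suc)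

lemma Dl_pos: "k \<le> M \<Longrightarrow> Dl T k > 0"
proof (induction k)
  case 0 then show ?case by simp
next
  case (Suc k)
  then show ?case using lo_pos[of k] up_pos[of k] by (simp add: Dl_Suc)
qed

lemma CD:
  "K \<le> M \<Longrightarrow> (x - y) * (\<Sum>k\<le>K. Dl T k * ff T k x * ff T k y)
      = Dl T K * (rr T K x * ff T K y - ff T K x * rr T K y)"
proof (induction K)
  case 0 then show ?case by (simp add: rr_def algebra_simps)
next
  case (Suc K)
  then have K: "K < M" by simp
  have lo: "T (Suc K) K \<noteq> 0" using lo_pos[OF K] by simp
  have "(x - y) * (\<Sum>k\<le>Suc K. Dl T k * ff T k x * ff T k y)
      = Dl T K * (rr T K x * ff T K y - ff T K x * rr T K y)
        + (x - y) * Dl T (Suc K) * ff T (Suc K) x * ff T (Suc K) y"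
    using Suc.IH K by (simp add: algebra_simps)
  also have "\<dots> = Dl T K * T K (Suc K) * (ff T (Suc K) x * ff T K y - ff T K x * ff T (Suc K) y)
        + (x - y) * Dl T (Suc K) * ff T (Suc K) x * ff T (Suc K) y"
    using rr_lt[OF K] by (simp add: algebra_simps)
  also have "\<dots> = Dl T (Suc K) * (rr T (Suc K) x * ff T (Suc K) y - ff T (Suc K) x * rr T (Suc K) y)"
    using lo by (simp add: rr_def Dl_Suc field_simps)
  finally show ?case .
qed

definition rowok :: "real \<Rightarrow> (nat \<Rightarrow> real) \<Rightarrow> nat \<Rightarrow> bool" where
  "rowok E z i \<longleftrightarrow> (if 0 < i then T i (i - 1) * z (i - 1) else 0) + T i i * z i
      + (if i < M then T i (Suc i) * z (Suc i) else 0) = E * z i"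

lemma ff_rowok: "i < M \<or> (i = M \<and> tdet T (Suc M) E = 0) \<Longrightarrow> rowok E (\<lambda>k. ff T k E) i"
proof -
  assume a: "i < M \<or> (i = M \<and> tdet T (Suc M) E = 0)"
  have "rr T i E = (if i < M then T i (Suc i) * ff T (Suc i) E else 0)"
    using a rr_lt rr_tdet[of M] by auto
  then show ?thesis unfolding rowok_def rr_def by (auto simp: algebra_simps split: if_splits)
qed

lemma backward_unique:
  assumes v: "\<And>i. 0 < i \<Longrightarrow> i \<le> M \<Longrightarrow> rowok E v i"
    and w: "\<And>i. 0 < i \<Longrightarrow> i \<le> M \<Longrightarrow> rowok E w i"
    and wM: "w M = 1"
  shows "i \<le> M \<Longrightarrow> v i = v M * w i"
proof -
  have "\<forall>t. t \<le> M \<longrightarrow> v (M - t) = v M * w (M - t) \<and>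
          (Suc t \<le> M \<longrightarrow> v (M - Suc t) = v M * w (M - Suc t))" (is "\<forall>t. ?P t")
  proof
    fix t show "?P t"
    proof (induction t)
      case 0
      show ?case
      proof (intro conjI impI)
        show "v (M - 0) = v M * w (M - 0)" using wM by simp
        assume M: "Suc 0 \<le> M"
        have lo: "T M (M - 1) \<noteq> 0" using lo_pos[of "M - 1"] M by simp
        have e1: "T M (M - 1) * v (M - 1) = (E - T M M) * v M"
          using v[of M] M unfolding rowok_def by (simp add: algebra_simps)
        have e2: "T M (M - 1) * w (M - 1) = E - T M M"
          using w[of M] M wM unfolding rowok_def by (simp add: algebra_simps)
        have "T M (M - 1) * v (M - 1) = T M (M - 1) * w (M - 1) * v M"
          unfolding e1 e2 ..
        then have "T M (M - 1) * v (M - 1) = T M (M - 1) * (v M * w (M - 1))"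
          by (simp add: algebra_simps)
        then show "v (M - Suc 0) = v M * w (M - Suc 0)"
          using lo by simp
      qed
    next
      case (Suc t)
      show ?case
      proof (intro conjI impI)
        assume "Suc t \<le> M"
        then show "v (M - Suc t) = v M * w (M - Suc t)" using Suc by simp
      next
        assume St: "Suc (Suc t) \<le> M"
        define i where "i = M - Suc t"
        have i: "0 < i" "i < M" "Suc i = M - t" "i - 1 = M - Suc (Suc t)" using St by (auto simp: i_def)
        have lo: "T i (i - 1) \<noteq> 0" using lo_pos[of "i - 1"] i by simp
        have IH1: "v i = v M * w i" and IH2: "v (Suc i) = v M * w (Suc i)"
          using Suc St i by (auto simp: i_def)
        have e1: "T i (i - 1) * v (i - 1) = (E - T i i) * v i - T i (Suc i) * v (Suc i)"
          using v[of i] i unfolding rowok_def by (simp add: algebra_simps)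
        have e2: "T i (i - 1) * w (i - 1) = (E - T i i) * w i - T i (Suc i) * w (Suc i)"
          using w[of i] i unfolding rowok_def by (simp add: algebra_simps)
        have "T i (i - 1) * v (i - 1) = v M * (T i (i - 1) * w (i - 1))"
          unfolding e1 e2 IH1 IH2 by (simp add: algebra_simps)
        then have "T i (i - 1) * v (i - 1) = T i (i - 1) * (v M * w (i - 1))"
          by (simp add: algebra_simps)
        then have "v (i - 1) = v M * w (i - 1)" using lo by simp
        then show "v (M - Suc (Suc t)) = v M * w (M - Suc (Suc t))" using i by simp
      qed
    qed
  qed
  moreover assume "i \<le> M"
  ultimately show "v i = v M * w i"
    by (metis diff_diff_cancel diff_le_self)
qed

end



fun tpoly :: "(nat \<Rightarrow> nat \<Rightarrow> real) \<Rightarrow> nat \<Rightarrow> real poly" where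
  "tpoly T 0 = 1"
| "tpoly T (Suc 0) = [:- T 0 0, 1:]"
| "tpoly T (Suc (Suc k)) = [:- T (Suc k) (Suc k), 1:] * tpoly T (Suc k)
     - Polynomial.smult (T (Suc k) k * T k (Suc k)) (tpoly T k)"

lemma tdet_poly:
  assumes tri: "\<And>i j. Suc i < j \<Longrightarrow> T i j = 0 \<and> T j i = 0"
  shows "tdet T k E = poly (tpoly T k) E"
proof (induction k rule: less_induct)
  case (less k)
  show ?case
  proof (cases k)
    case 0 then show ?thesis by (simp add: tdet_0)
  next
    case (Suc m)
    show ?thesis
    proof (cases m)
      case 0 then show ?thesis using Suc tdet_1[of T E] by simp
    next
      case (Suc m')
      have "tdet T m' E = poly (tpoly T m') E" "tdet T (Suc m') E = poly (tpoly T (Suc m')) E"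
        using less.IH \<open>k = Suc m\<close> Suc by auto
      then show ?thesis using \<open>k = Suc m\<close> Suc by (simp add: tdet_rec[OF tri] algebra_simps)
    qed
  qed
qed

lemma tpoly_deg: "degree (tpoly T k) \<le> k \<and> coeff (tpoly T k) k = 1"
proof (induction T k rule: tpoly.induct)
  case (3 T k)
  let ?P = "tpoly T (Suc k)" and ?Q = "tpoly T k"
  have d1: "degree ([:- T (Suc k) (Suc k), 1:] * ?P) \<le> Suc (Suc k)"
    using degree_mult_le[of "[:- T (Suc k) (Suc k), 1:]" ?P] 3 by simp
  have d2: "degree (Polynomial.smult (T (Suc k) k * T k (Suc k)) ?Q) \<le> Suc (Suc k)"
    using degree_smult_le[of _ ?Q] 3 by (meson le_SucI order_trans)
  have c1: "coeff ([:- T (Suc k) (Suc k), 1:] * ?P) (Suc (Suc k)) = 1"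
  proof -
    have "coeff ?P (Suc (Suc k)) = 0" using 3 by (intro coeff_eq_0) simp
    then show ?thesis using 3 by (simp add: mult_pCons_left)
  qed
  have c2: "coeff ?Q (Suc (Suc k)) = 0" using 3 by (intro coeff_eq_0) simp
  show ?case
    using d1 d2 c1 c2 by (simp add: degree_diff_le)
qed auto

lemma cont_eq_punct:
  fixes f g :: "real \<Rightarrow> real"
  assumes "isCont f a" "isCont g a" "\<And>x. x \<noteq> a \<Longrightarrow> f x = g x"
  shows "f a = g a"
proof -
  have "(f \<longlongrightarrow> f a) (at a)" using assms(1) isCont_def by blast
  moreover have "(g \<longlongrightarrow> g a) (at a)" using assms(2) isCont_def by blast
  moreover have "eventually (\<lambda>x. f x = g x) (at a)"
    using assms(3) by (auto simp: eventually_at_filter)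
  ultimately have "(f \<longlongrightarrow> g a) (at a)" by (metis (mono_tags) tendsto_cong)
  then show ?thesis using \<open>(f \<longlongrightarrow> f a) (at a)\<close> tendsto_unique trivial_limit_at by blast
qed

lemma sqrt_prod: "finite A \<Longrightarrow> sqrt (\<Prod>x\<in>A. f x) = (\<Prod>x\<in>A. sqrt (f x))"
  by (induction A rule: finite_induct) (simp_all add: real_sqrt_mult)

lemma det_diagm: "det (diagm n d) = (\<Prod>i<n. d i)"
proof -
  have "det (diagm n d) = prod_list (diag_mat (diagm n d))"
    by (rule det_upper_triangular[of _ n]) (auto simp: diagm_def upper_triangular_def)
  also have "\<dots> = prod_list (map d [0..<n])"
    unfolding diag_mat_def diagm_def by (intro arg_cong[where f = prod_list] map_cong) auto
  also have "\<dots> = (\<Prod>i<n. d i)"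
    by (simp add: prod.distinct_set_conv_list[symmetric] atLeast0LessThan)
  finally show ?thesis .
qed

lemma dim_diagm[simp]: "dim_row (diagm n d) = n" "dim_col (diagm n d) = n"
  by (simp_all add: diagm_def)

lemma diagm_carrier[simp]: "diagm n d \<in> carrier_mat n n"
  by (simp add: diagm_def)

lemma diag_mult_entry:
  assumes X: "X \<in> carrier_mat n n" and i: "i < n" and k: "k < n"
  shows "(diagm n d1 * X * diagm n d2) $$ (i, k) = d1 i * X $$ (i, k) * d2 k"
proof -
  have DX: "diagm n d1 * X \<in> carrier_mat n n" by (rule mult_carrier_mat[OF _ X]) (simp add: diagm_def)
  have e1: "(diagm n d1 * X) $$ (i, l) = d1 i * X $$ (i, l)" if l: "l < n" for l
  proof -
    have "(diagm n d1 * X) $$ (i, l) = (\<Sum>m<n. (if i = m then d1 i else 0) * X $$ (m, l))"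
      using X i l by (simp add: diagm_def scalar_prod_def atLeast0LessThan)
    also have "\<dots> = (\<Sum>m<n. if i = m then d1 i * X $$ (i, l) else 0)"
      by (rule sum.cong) auto
    also have "\<dots> = d1 i * X $$ (i, l)"
      using i by (simp add: sum.delta)
    finally show ?thesis .
  qed
  have D2: "diagm n d2 \<in> carrier_mat n n" by (simp add: diagm_def)
  have "(diagm n d1 * X * diagm n d2) $$ (i, k)
        = (\<Sum>m<n. (diagm n d1 * X) $$ (i, m) * diagm n d2 $$ (m, k))"
  proof -
    have dims: "dim_row (diagm n d1 * X) = n" "dim_col (diagm n d1 * X) = n"
      "dim_row (diagm n d2) = n" "dim_col (diagm n d2) = n" using DX D2 by auto
    show ?thesis
      using X by (simp add: index_mult_mat dims i k scalar_prod_def atLeast0LessThan)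
  qed
  also have "\<dots> = (\<Sum>m<n. (diagm n d1 * X) $$ (i, m) * (if m = k then d2 k else 0))"
    by (rule sum.cong) (auto simp: diagm_def k)
  also have "\<dots> = (diagm n d1 * X) $$ (i, k) * d2 k"
  proof -
    have "(\<Sum>m<n. (diagm n d1 * X) $$ (i, m) * (if m = k then d2 k else 0))
        = (\<Sum>m<n. if m = k then (diagm n d1 * X) $$ (i, k) * d2 k else 0)"
      by (rule sum.cong) auto
    then show ?thesis using k by (simp add: sum.delta')
  qed
  finally show ?thesis using e1 k by simp
qed



locale jac2 = jac +
  fixes Ev :: "nat \<Rightarrow> real" and T' :: "nat \<Rightarrow> nat \<Rightarrow> real"
  assumes Ev_dec: "\<And>i j. i < j \<Longrightarrow> j \<le> M \<Longrightarrow> Ev j < Ev i"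
    and Ev_root: "\<And>j. j \<le> M \<Longrightarrow> tdet T (Suc M) (Ev j) = 0"
    and tri': "\<And>i j. Suc i < j \<Longrightarrow> T' i j = 0 \<and> T' j i = 0"
    and swap: "\<And>i j. i \<le> M \<Longrightarrow> j \<le> M \<Longrightarrow> T' i j = T (M - i) (M - j)"
begin

lemma jac': "jac T' M"
proof
  fix k assume k: "k < M"
  have "T' (Suc k) k = T (M - Suc k) (Suc (M - Suc k))" using k swap[of "Suc k" k]
    by (simp add: Suc_diff_Suc)
  then show "T' (Suc k) k > 0" using up_pos[of "M - Suc k"] k by simp
  have "T' k (Suc k) = T (Suc (M - Suc k)) (M - Suc k)" using k swap[of k "Suc k"]
    by (simp add: Suc_diff_Suc)
  then show "T' k (Suc k) > 0" using lo_pos[of "M - Suc k"] k by simp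
qed (rule tri')

lemma Ev_inj: "inj_on Ev {..<Suc M}"
  unfolding inj_on_def
  by (metis Ev_dec less_Suc_eq_le lessThan_iff linorder_neqE_nat order_less_irrefl)

lemma Ev_ne: "i \<le> M \<Longrightarrow> j \<le> M \<Longrightarrow> i \<noteq> j \<Longrightarrow> Ev i \<noteq> Ev j"
  using Ev_inj unfolding inj_on_def by auto

lemma ff_swap:
  assumes j: "j \<le> M"
  shows "ff T M (Ev j) * ff T' M (Ev j) = 1"
proof -
  interpret J': jac T' M by (rule jac')
  let ?E = "Ev j"
  define v where "v = (\<lambda>k. ff T k ?E)"
  define w where "w = (\<lambda>i. ff T' (M - i) ?E)"
  have v: "rowok ?E v i" if "0 < i" "i \<le> M" for i
    unfolding v_def using ff_rowok[of i ?E] that Ev_root[OF j] by (cases "i < M") auto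
  have w: "rowok ?E w i" if i: "0 < i" "i \<le> M" for i
  proof -
    have r: "J'.rowok ?E (\<lambda>k. ff T' k ?E) (M - i)"
      using J'.ff_rowok[of "M - i" ?E] i by auto
    have s1: "T' (M - i) (M - i) = T i i" using swap[of "M - i" "M - i"] i by simp
    have s2: "T' (M - i) (M - (i - 1)) = T i (i - 1)" using swap[of "M - i" "M - (i - 1)"] i by simp
    have s3: "T' (M - i) (M - Suc i) = T i (Suc i)" if "i < M"
      using swap[of "M - i" "M - Suc i"] i that by simp
    have e1: "Suc (M - i) = M - (i - 1)" using i by simp
    have e2: "M - i - 1 = M - Suc i" by simp
    show ?thesis
      using r i s1 s2 s3 unfolding rowok_def J'.rowok_def w_def e1 e2
      by (cases "i < M") (auto simp: algebra_simps)
  qed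
  have "v 0 = v M * w 0"
    by (rule backward_unique[OF v w]) (auto simp: w_def)
  then show ?thesis by (simp add: v_def w_def)
qed

definition Acf :: real where "Acf = (\<Prod>l\<in>{1..M}. T l (l - 1))"

definition Nn :: "nat \<Rightarrow> real" where
  "Nn j = 1 / (\<bar>ff T' M (Ev j)\<bar> * Acf) * (\<Prod>l\<in>{0..M} - {j}. \<bar>Ev j - Ev l\<bar>)"

lemma Acf_pos: "Acf > 0"
  unfolding Acf_def by (rule prod_pos) (use lo_pos in \<open>auto, metis Suc_pred' diff_less le_less_trans less_one not_le zero_less_Suc\<close>)

lemma DlU: "Dl T M * (\<Prod>j<M. inverse (T j (Suc j))) = inverse Acf"
proof -
  define P where "P = (\<Prod>j<M. T j (Suc j))"
  define Q where "Q = (\<Prod>j<M. inverse (T j (Suc j)))"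
  have Ppos: "P > 0" unfolding P_def by (rule prod_pos) (simp add: up_pos less_imp_le)
  have "Dl T M = (\<Prod>l\<in>{1..M}. T (l - 1) l) / Acf"
    unfolding Dl_def Acf_def by (rule prod_dividef)
  moreover have "(\<Prod>l\<in>{1..M}. T (l - 1) l) = P"
    using prod.atLeast1_atMost_eq[of "\<lambda>l. T (l - 1) l" M] by (simp add: P_def)
  ultimately have h1: "Dl T M * Acf = P" using Acf_pos by simp
  have "Q = inverse P"
    using prod_inversef[of "\<lambda>j. T j (Suc j)" "{..<M}"] by (simp add: comp_def P_def Q_def)
  then have h2: "P * Q = 1" using Ppos by simp
  have "Dl T M * Q * Acf = 1" using h1 h2 by (metis mult.commute mult.left_commute)
  then show ?thesis using Acf_pos unfolding Q_def[symmetric] by (simp add: field_simps)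
qed

lemma tpoly_roots: "tpoly T (Suc M) = (\<Prod>l<Suc M. [:- Ev l, 1:])"
proof -
  have "tpoly T (Suc M) = Polynomial.smult (coeff (tpoly T (Suc M)) (Suc M)) (\<Prod>l<Suc M. [:- Ev l, 1:])"
    by (rule poly_roots_prod) (use tpoly_deg Ev_inj Ev_root tdet_poly[OF tri] in auto)
  then show ?thesis using tpoly_deg by simp
qed

lemma S_orth:
  assumes i: "i \<le> M" and j: "j \<le> M"
  shows "(\<Sum>k\<le>M. Dl T k * ff T k (Ev i) * ff T k (Ev j)) = (if i = j then Nn j else 0)"
proof -
  have rrj: "rr T M (Ev j) = 0" using rr_tdet[of M] Ev_root[OF j] by simp
  show ?thesis
  proof (cases "i = j")
    case False
    have "(Ev i - Ev j) * (\<Sum>k\<le>M. Dl T k * ff T k (Ev i) * ff T k (Ev j)) = 0"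
      using CD[of M "Ev i" "Ev j"] rrj rr_tdet[of M] Ev_root[OF i] by simp
    then show ?thesis using False Ev_ne[OF i j] by simp
  next
    case True
    define U where "U = (\<Prod>j<M. inverse (T j (Suc j)))"
    define S where "S = (\<lambda>x. \<Sum>k\<le>M. Dl T k * ff T k x * ff T k (Ev j))"
    define R where "R = (\<lambda>x. Dl T M * U * ff T M (Ev j) * (\<Prod>l\<in>{0..M} - {j}. (x - Ev l)))"
    have prodsplit: "(\<Prod>l<Suc M. (x - Ev l)) = (x - Ev j) * (\<Prod>l\<in>{0..M} - {j}. (x - Ev l))" for x
    proof -
      have "{..<Suc M} = {0..M}" by auto
      then show ?thesis using j by (simp add: prod.remove[of "{0..M}" j])
    qed
    have SR: "S x = R x" if x: "x \<noteq> Ev j" for x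
    proof -
      have e: "(x - Ev j) * S x = Dl T M * (rr T M x * ff T M (Ev j))"
        using CD[of M x "Ev j"] rrj by (simp add: S_def)
      have r: "rr T M x = (\<Prod>l<Suc M. (x - Ev l)) * U"
        using rr_tdet[of M x] by (simp add: tdet_poly[OF tri] tpoly_roots poly_prod U_def algebra_simps)
      have "(x - Ev j) * S x = (x - Ev j) * R x"
        unfolding e r prodsplit R_def by (simp add: algebra_simps)
      then show ?thesis using x by simp
    qed
    have ffc: "isCont (\<lambda>x. ff T k x) a" for k a
    proof -
      have "(\<lambda>x. ff T k x) = (\<lambda>x. poly (tpoly T k) x * (\<Prod>j<k. inverse (T j (Suc j))))"
        by (simp add: fun_eq_iff ff_def tdet_poly[OF tri])
      then show ?thesis by (simp add: poly_isCont)
    qed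
    have "S (Ev j) = R (Ev j)"
      by (rule cont_eq_punct[OF _ _ SR]) (auto simp: S_def R_def intro!: continuous_intros ffc)
    also have "\<dots> = (\<Prod>l\<in>{0..M} - {j}. (Ev j - Ev l)) / (Acf * ff T' M (Ev j))"
    proof -
      have nz: "ff T' M (Ev j) \<noteq> 0" using ff_swap[OF j] by auto
      have "ff T M (Ev j) = inverse (ff T' M (Ev j))" using ff_swap[OF j] nz by (simp add: field_simps)
      then show ?thesis using DlU by (simp add: R_def U_def field_simps)
    qed
    finally have SE: "S (Ev j) = (\<Prod>l\<in>{0..M} - {j}. (Ev j - Ev l)) / (Acf * ff T' M (Ev j))" .
    have "S (Ev j) \<ge> Dl T 0 * ff T 0 (Ev j) * ff T 0 (Ev j)"
      unfolding S_def
    proof (rule member_le_sum)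
      fix k assume "k \<in> {..M} - {0}"
      then have k: "k \<le> M" by simp
      have "0 \<le> Dl T k * (ff T k (Ev j) * ff T k (Ev j))"
        by (rule mult_nonneg_nonneg) (use Dl_pos[OF k] in auto)
      then show "0 \<le> Dl T k * ff T k (Ev j) * ff T k (Ev j)" by (simp add: mult.assoc)
    qed auto
    then have Spos: "S (Ev j) > 0" by simp
    then have "S (Ev j) = \<bar>S (Ev j)\<bar>" by simp
    also have "\<dots> = Nn j"
      unfolding SE Nn_def using Acf_pos by (simp add: abs_prod abs_mult field_simps)
    finally show ?thesis using True by (simp add: S_def)
  qed
qed

end



lemma sign_vdm:
  fixes x :: "nat \<Rightarrow> real"
  assumes dec: "\<And>i j. i < j \<Longrightarrow> j \<le> M \<Longrightarrow> x j < x i"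
  shows "(\<Prod>l<Suc M. \<Prod>j<l. (x l - x j)) = (-1) ^ (M * Suc M div 2) * (\<Prod>l<Suc M. \<Prod>j<l. (x j - x l))"
    and "(\<Prod>l<Suc M. \<Prod>j<l. (x j - x l)) > 0"
proof -
  have "(\<Prod>l<Suc M. \<Prod>j<l. (x l - x j)) = (\<Prod>l<Suc M. (-1) ^ l * (\<Prod>j<l. (x j - x l)))"
  proof (rule prod.cong)
    fix l show "(\<Prod>j<l. (x l - x j)) = (-1) ^ l * (\<Prod>j<l. (x j - x l))"
      using prod_uminus[of "\<lambda>j. x j - x l" "{..<l}"] by simp
  qed simp
  also have "\<dots> = (\<Prod>l<Suc M. (-1::real) ^ l) * (\<Prod>l<Suc M. \<Prod>j<l. (x j - x l))"
    by (rule prod.distrib)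
  also have "(\<Prod>l<Suc M. (-1::real) ^ l) = (-1) ^ (\<Sum>l<Suc M. l)"
    by (rule power_sum[symmetric])
  also have "(\<Sum>l<Suc M. l) = M * Suc M div 2"
    using gauss_sum_nat[of M] by (simp add: atLeast0AtMost lessThan_Suc_atMost)
  finally show "(\<Prod>l<Suc M. \<Prod>j<l. (x l - x j)) = (-1) ^ (M * Suc M div 2) * (\<Prod>l<Suc M. \<Prod>j<l. (x j - x l))" .
  show "(\<Prod>l<Suc M. \<Prod>j<l. (x j - x l)) > 0"
    by (intro prod_pos) (auto intro: dec)
qed

context jac2
begin

lemma Nn_pos: "j \<le> M \<Longrightarrow> Nn j > 0"
proof -
  assume j: "j \<le> M"
  have "ff T' M (Ev j) \<noteq> 0" using ff_swap[OF j] by auto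
  moreover have "(\<Prod>l\<in>{0..M} - {j}. \<bar>Ev j - Ev l\<bar>) > 0"
    by (rule prod_pos) (use Ev_ne j in auto)
  ultimately show ?thesis unfolding Nn_def using Acf_pos by simp
qed

theorem generic_main:
  defines "F \<equiv> mat (M + 1) (M + 1) (\<lambda>(k, j). ff T k (Ev j))"
  defines "G \<equiv> diagm (M + 1) (\<lambda>l. inverse (Nn l)) * transpose_mat F * diagm (M + 1) (Dl T)"
  shows "invertible_mat F \<and> inverts_mat F G \<and> inverts_mat G F \<and>
         det F = (-1) ^ (M * (M + 1) div 2) * (\<Prod>l\<in>{0..M}. sqrt (Nn l / Dl T l))"
proof -
  let ?n = "M + 1"
  have Fc: "F \<in> carrier_mat ?n ?n" unfolding F_def by simp
  have FTc: "transpose_mat F \<in> carrier_mat ?n ?n" using Fc by simp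
  have Gc: "G \<in> carrier_mat ?n ?n" unfolding G_def using FTc by (intro mult_carrier_mat) auto
  have GF: "G * F = 1\<^sub>m ?n"
  proof (rule eq_matI)
    fix i j assume i: "i < dim_row (1\<^sub>m ?n)" and j: "j < dim_col (1\<^sub>m ?n)"
    then have i': "i \<le> M" and j': "j \<le> M" by auto
    have "(G * F) $$ (i, j) = (\<Sum>k<?n. G $$ (i, k) * F $$ (k, j))"
      using Gc Fc i j by (simp add: scalar_prod_def atLeast0LessThan)
    also have "\<dots> = (\<Sum>k<?n. inverse (Nn i) * (Dl T k * ff T k (Ev i) * ff T k (Ev j)))"
    proof (rule sum.cong)
      fix k assume "k \<in> {..<?n}"
      then have k: "k < ?n" by simp
      have "G $$ (i, k) = inverse (Nn i) * transpose_mat F $$ (i, k) * Dl T k"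
        unfolding G_def by (rule diag_mult_entry[OF FTc]) (use i k in auto)
      then show "G $$ (i, k) * F $$ (k, j) = inverse (Nn i) * (Dl T k * ff T k (Ev i) * ff T k (Ev j))"
        using i j k Fc by (simp add: F_def)
    qed simp
    also have "\<dots> = inverse (Nn i) * (\<Sum>k\<le>M. Dl T k * ff T k (Ev i) * ff T k (Ev j))"
      by (simp add: sum_distrib_left lessThan_Suc_atMost)
    also have "\<dots> = 1\<^sub>m ?n $$ (i, j)"
      using S_orth[OF i' j'] Nn_pos[OF j'] i j by simp
    finally show "(G * F) $$ (i, j) = 1\<^sub>m ?n $$ (i, j)" .
  qed (use Gc Fc in auto)
  have FG: "F * G = 1\<^sub>m ?n" by (rule mat_mult_left_right_inverse[OF Gc Fc GF])
  have inv1: "inverts_mat F G" unfolding inverts_mat_def using FG Fc by simp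
  have inv2: "inverts_mat G F" unfolding inverts_mat_def using GF Gc by simp
  have invF: "invertible_mat F" unfolding invertible_mat_def using inv1 inv2 Fc by auto
  have "det (G * F) = 1" using GF by simp
  moreover have "det (G * F) = (\<Prod>i<?n. inverse (Nn i)) * det F * (\<Prod>i<?n. Dl T i) * det F"
  proof -
    have "det (G * F) = det G * det F" by (rule det_mult[OF Gc Fc])
    moreover have "det G = det (diagm ?n (\<lambda>l. inverse (Nn l)) * transpose_mat F) * det (diagm ?n (Dl T))"
      unfolding G_def by (rule det_mult) (use FTc in auto)
    moreover have "det (diagm ?n (\<lambda>l. inverse (Nn l)) * transpose_mat F)
        = det (diagm ?n (\<lambda>l. inverse (Nn l))) * det (transpose_mat F)"
      by (rule det_mult) (use FTc in auto)
    moreover have "det (transpose_mat F) = det F" by (rule det_transpose[OF Fc])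
    ultimately show ?thesis by (simp add: det_diagm)
  qed
  ultimately have h: "(\<Prod>i<?n. inverse (Nn i)) * det F * (\<Prod>i<?n. Dl T i) * det F = 1" by simp
  have Nnp: "(\<Prod>i<?n. Nn i) > 0" by (rule prod_pos) (use Nn_pos in \<open>auto intro: less_imp_le\<close>)
  have "(\<Prod>i<?n. inverse (Nn i)) = inverse (\<Prod>i<?n. Nn i)"
    using prod_inversef[of Nn "{..<?n}"] by (simp add: comp_def)
  then have pa: "(\<Prod>i<?n. Nn i) * (\<Prod>i<?n. inverse (Nn i)) = 1"
    using Nnp by (metis right_inverse less_irrefl)
  have dsq: "det F * det F * (\<Prod>i<?n. Dl T i) = (\<Prod>i<?n. Nn i)"
  proof -
    have "(\<Prod>i<?n. Nn i) = (\<Prod>i<?n. Nn i) * ((\<Prod>i<?n. inverse (Nn i)) * det F * (\<Prod>i<?n. Dl T i) * det F)"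
      using h by simp
    also have "\<dots> = ((\<Prod>i<?n. Nn i) * (\<Prod>i<?n. inverse (Nn i))) * (det F * det F * (\<Prod>i<?n. Dl T i))"
      by (simp only: ac_simps)
    finally show ?thesis using pa by (metis mult_1_left)
  qed
  have Dlp: "(\<Prod>i<?n. Dl T i) > 0" by (rule prod_pos) (use Dl_pos in auto)
  have dsq2: "det F * det F = (\<Prod>l\<in>{0..M}. Nn l / Dl T l)"
  proof -
    have e1: "(\<Prod>l\<in>{0..M}. Nn l / Dl T l) = (\<Prod>i<?n. Nn i) / (\<Prod>i<?n. Dl T i)"
      by (simp add: prod_dividef atLeast0AtMost lessThan_Suc_atMost)
    have gen: "\<And>a b c::real. a * c = b \<Longrightarrow> c > 0 \<Longrightarrow> a = b / c" by (simp add: field_simps)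
    show ?thesis unfolding e1 by (rule gen[OF dsq Dlp])
  qed
  define c where "c = (\<lambda>k. \<Prod>j<k. inverse (T j (Suc j)))"
  define Q where "Q = (\<lambda>k. Polynomial.smult (c k) (tpoly T k))"
  have FQ: "F = mat ?n ?n (\<lambda>(k, j). poly (Q k) (Ev j))"
    unfolding F_def Q_def c_def ff_def by (rule eq_matI) (auto simp: tdet_poly[OF tri] mult.commute)
  have degQ: "degree (Q k) \<le> k" for k
    unfolding Q_def using tpoly_deg[of T k] degree_smult_le order_trans by blast
  have coQ: "coeff (Q k) k = c k" for k using tpoly_deg[of T k] by (simp add: Q_def)
  have detF: "det F = (\<Prod>k<?n. c k) * (\<Prod>l<Suc M. \<Prod>j<l. (Ev l - Ev j))"
    unfolding FQ using vandermonde_gen[of Q Ev ?n, OF degQ] Ev_inj by (simp add: coQ)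
  have cpos: "(\<Prod>k<?n. c k) > 0"
    unfolding c_def by (intro prod_pos) (use up_pos in \<open>auto intro: less_imp_le\<close>)
  define W where "W = (\<Prod>k<?n. c k) * (\<Prod>l<Suc M. \<Prod>j<l. (Ev j - Ev l))"
  have Wpos: "W > 0" unfolding W_def using cpos sign_vdm(2)[of M Ev] Ev_dec by simp
  have detFW: "det F = (-1) ^ (M * (M + 1) div 2) * W"
    unfolding detF W_def using sign_vdm(1)[of M Ev] Ev_dec by simp
  have "(\<Prod>l\<in>{0..M}. sqrt (Nn l / Dl T l)) = sqrt (det F * det F)"
    by (simp add: dsq2 sqrt_prod)
  also have "\<dots> = W" using detFW Wpos by (simp add: abs_mult power_abs)
  finally have "det F = (-1) ^ (M * (M + 1) div 2) * (\<Prod>l\<in>{0..M}. sqrt (Nn l / Dl T l))"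
    using detFW by simp
  then show ?thesis using invF inv1 inv2 by simp
qed

end



section \<open>Theta products\<close>

lemma fac_pos:
  fixes p c :: real and q :: "nat \<Rightarrow> real"
  assumes p: "0 < p" "p < 1" and q: "0 \<le> q n" "q n < 1" and c: "\<bar>c\<bar> \<le> 1"
  shows "(1 - p ^ (2 * Suc n)) * (1 + 2 * q n * c + q n ^ 2) > 0"
proof -
  have "p ^ Suc (Suc (2 * n)) < 1" by (rule power_Suc_less_one[OF p])
  then have a: "1 - p ^ (2 * Suc n) > 0" by simp
  have "q n * c \<ge> - q n" using c q mult_left_mono[of "-1" c "q n"] by auto
  then have "1 + 2 * q n * c + q n ^ 2 \<ge> (1 - q n) ^ 2" by (simp add: power2_eq_square algebra_simps)
  moreover have "(1 - q n) ^ 2 > 0" using q by simp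
  ultimately have b: "1 + 2 * q n * c + q n ^ 2 > 0" by linarith
  show ?thesis by (rule mult_pos_pos[OF a b])
qed

lemma fac_conv:
  fixes p c :: real and q :: "nat \<Rightarrow> real"
  assumes p: "0 < p" "p < 1" and q: "\<And>n. 0 \<le> q n" "\<And>n. q n \<le> p ^ Suc n" and c: "\<bar>c\<bar> \<le> 1"
  shows "convergent_prod (\<lambda>n. (1 - p ^ (2 * Suc n)) * (1 + 2 * q n * c + q n ^ 2))"
proof -
  have q1: "q n < 1" for n using q(2)[of n] power_Suc_less_one[OF p, of n] by simp
  have pn: "p ^ m \<le> p ^ n" if "n \<le> m" for m n by (rule power_decreasing) (use that p in auto)
  have geo: "summable (\<lambda>n. p ^ n)" using p by (intro summable_geometric) simp
  have A: "convergent_prod (\<lambda>n. 1 + (- (p ^ (2 * Suc n))))"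
  proof (rule summable_imp_convergent_prod_real)
    show "summable (\<lambda>n. \<bar>(- (p ^ (2 * Suc n)))\<bar>)"
    proof (rule summable_comparison_test'[OF geo, of 0])
      fix n
      have "p ^ (2 * Suc n) \<le> p ^ n" by (rule pn) simp
      then show "norm \<bar>(- (p ^ (2 * Suc n)))\<bar> \<le> p ^ n" using p by simp
    qed
    show "- (p ^ (2 * Suc n)) \<noteq> - 1" for n
      using power_Suc_less_one[OF p, of "Suc (2 * n)"] by simp
  qed
  have B: "convergent_prod (\<lambda>n. 1 + (2 * q n * c + q n ^ 2))"
  proof (rule summable_imp_convergent_prod_real)
    show "summable (\<lambda>n. \<bar>2 * q n * c + q n ^ 2\<bar>)"
    proof (rule summable_comparison_test'[OF summable_mult[OF geo, of 3], of 0])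
      fix n
      have h1: "\<bar>2 * q n * c + q n ^ 2\<bar> \<le> \<bar>2 * q n * c\<bar> + q n ^ 2"
        using abs_triangle_ineq[of "2 * q n * c" "q n ^ 2"] by simp
      have h2: "\<bar>2 * q n * c\<bar> \<le> 2 * q n" using c q(1)[of n] by (simp add: abs_mult mult_left_le)
      have h3: "q n ^ 2 \<le> q n" using q(1)[of n] q1[of n] by (simp add: power2_eq_square mult_left_le)
      have h4: "q n \<le> p ^ n" using q(2)[of n] pn[of n "Suc n"] by simp
      show "norm \<bar>2 * q n * c + q n ^ 2\<bar> \<le> 3 * p ^ n" using h1 h2 h3 h4 by simp
    qed
    show "2 * q n * c + q n ^ 2 \<noteq> - 1" for n
      using fac_pos[where q=q and n=n, OF p q(1)[of n] q1[of n] c] by (metis add.right_inverse add.assoc mult_zero_right less_irrefl)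
  qed
  show ?thesis using convergent_prod_mult[OF A B] by (simp add: add.assoc)
qed

lemma fac_prodinf_pos:
  fixes p c :: real and q :: "nat \<Rightarrow> real"
  assumes p: "0 < p" "p < 1" and q: "\<And>n. 0 \<le> q n" "\<And>n. q n \<le> p ^ Suc n" and c: "\<bar>c\<bar> \<le> 1"
  shows "(\<Prod>n. (1 - p ^ (2 * Suc n)) * (1 + 2 * q n * c + q n ^ 2)) > 0"
proof (rule less_0_prodinf[OF fac_conv[OF assms]])
  fix n
  have q1: "q n < 1" using q(2)[of n] power_Suc_less_one[OF p, of n] by simp
  show "(1 - p ^ (2 * Suc n)) * (1 + 2 * q n * c + q n ^ 2) > 0" by (rule fac_pos[where q=q and n=n, OF p q(1)[of n] q1 c])
qed

definition P1 :: "real \<Rightarrow> real \<Rightarrow> real" where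
  "P1 p z = (\<Prod>n. (1 - p ^ (2 * Suc n)) * (1 + 2 * p ^ (2 * Suc n) * (- cos (2 * z)) + (p ^ (2 * Suc n)) ^ 2))"
definition P2 :: "real \<Rightarrow> real \<Rightarrow> real" where
  "P2 p z = (\<Prod>n. (1 - p ^ (2 * Suc n)) * (1 + 2 * p ^ (2 * Suc n) * cos (2 * z) + (p ^ (2 * Suc n)) ^ 2))"
definition P3 :: "real \<Rightarrow> real \<Rightarrow> real" where
  "P3 p z = (\<Prod>n. (1 - p ^ (2 * Suc n)) * (1 + 2 * p ^ (2 * Suc n - 1) * cos (2 * z) + (p ^ (2 * Suc n - 1)) ^ 2))"
definition P4 :: "real \<Rightarrow> real \<Rightarrow> real" where
  "P4 p z = (\<Prod>n. (1 - p ^ (2 * Suc n)) * (1 + 2 * p ^ (2 * Suc n - 1) * (- cos (2 * z)) + (p ^ (2 * Suc n - 1)) ^ 2))"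

lemma pw4: "(p::real) ^ (4 * Suc n) = (p ^ (2 * Suc n)) ^ 2"
proof -
  have "4 * Suc n = 2 * Suc n * 2" by simp
  then show ?thesis by (simp only: power_mult)
qed
lemma pw4': "(p::real) ^ (4 * Suc n - 2) = (p ^ (2 * Suc n - 1)) ^ 2"
proof -
  have "4 * Suc n - 2 = (2 * Suc n - 1) * 2" by simp
  then show ?thesis by (simp only: power_mult)
qed

lemma theta1_P: "theta1 p z = 2 * p powr (1/4) * sin z * P1 p z"
  unfolding theta1_def P1_def pw4 by simp
lemma theta2_P: "theta2 p z = 2 * p powr (1/4) * cos z * P2 p z"
  unfolding theta2_def P2_def pw4 by simp
lemma theta3_P: "theta3 p z = P3 p z"
  unfolding theta3_def P3_def pw4' by simp
lemma theta4_P: "theta4 p z = P4 p z"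
  unfolding theta4_def P4_def pw4' by simp

lemma qbound1: "0 < p \<Longrightarrow> p < 1 \<Longrightarrow> (p::real) ^ (2 * Suc n) \<le> p ^ Suc n"
  by (rule power_decreasing) auto
lemma qbound3: "0 < p \<Longrightarrow> p < 1 \<Longrightarrow> (p::real) ^ (2 * Suc n - 1) \<le> p ^ Suc n"
  by (rule power_decreasing) auto

lemma P_pos:
  assumes "0 < p" "p < 1"
  shows "P1 p z > 0" "P2 p z > 0" "P3 p z > 0" "P4 p z > 0"
  unfolding P1_def P2_def P3_def P4_def
  by (rule fac_prodinf_pos; use assms qbound1 qbound3 in auto)+

lemma P_conv:
  fixes p z :: real
  assumes "0 < p" "p < 1"
  shows "convergent_prod (\<lambda>n. (1 - p ^ (2 * Suc n)) * (1 + 2 * p ^ (2 * Suc n) * (- cos (2 * z)) + (p ^ (2 * Suc n)) ^ 2))"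
  by (rule fac_conv) (use assms qbound1 in auto)

lemma theta_pos:
  assumes p: "0 < p" "p < 1"
  shows "0 < z \<Longrightarrow> z < pi \<Longrightarrow> theta1 p z > 0"
    and "\<bar>z\<bar> < pi / 2 \<Longrightarrow> theta2 p z > 0"
    and "theta3 p z > 0" and "theta4 p z > 0"
proof -
  have pw: "2 * p powr (1/4) > 0" using p by simp
  show "0 < z \<Longrightarrow> z < pi \<Longrightarrow> theta1 p z > 0"
    unfolding theta1_P by (intro mult_pos_pos pw sin_gt_zero P_pos[OF p])
  show "\<bar>z\<bar> < pi / 2 \<Longrightarrow> theta2 p z > 0"
    unfolding theta2_P by (intro mult_pos_pos pw cos_gt_zero_pi P_pos[OF p]) auto
  show "theta3 p z > 0" "theta4 p z > 0" unfolding theta3_P theta4_P by (rule P_pos[OF p])+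
qed

lemma theta_refl:
  "theta1 p (pi / 2 - y) = theta2 p y" "theta2 p (pi / 2 - y) = theta1 p y"
  "theta3 p (pi / 2 - y) = theta4 p y" "theta4 p (pi / 2 - y) = theta3 p y"
proof -
  have c: "cos (2 * (pi / 2 - y)) = - cos (2 * y)"
    by (simp add: right_diff_distrib cos_diff)
  have s1: "sin (pi / 2 - y) = cos y" by (simp add: sin_diff)
  have s2: "cos (pi / 2 - y) = sin y" by (simp add: cos_diff)
  show "theta1 p (pi / 2 - y) = theta2 p y" "theta2 p (pi / 2 - y) = theta1 p y"
    "theta3 p (pi / 2 - y) = theta4 p y" "theta4 p (pi / 2 - y) = theta3 p y"
    unfolding theta1_def theta2_def theta3_def theta4_def c s1 s2
    by simp_all
qed



lemma P1_split:
  fixes p z :: real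
  assumes p: "0 < p" "p < 1"
  defines "d \<equiv> (\<lambda>n. 2 * p ^ (2 * Suc n) / (1 - p ^ (2 * Suc n)) ^ 2)"
  shows "P1 p z = P1 p 0 * (\<Prod>n. 1 + (1 - cos (2 * z)) * d n)"
    and "summable d" and "\<And>n. d n \<ge> 0"
proof -
  define q where "q = (\<lambda>n. p ^ (2 * Suc n))"
  have q0: "0 \<le> q n" for n using p by (simp add: q_def)
  have q1: "q n < 1" for n using power_Suc_less_one[OF p, of "Suc (2 * n)"] by (simp add: q_def)
  have qp: "q n \<le> p ^ n" for n unfolding q_def by (rule power_decreasing) (use p in auto)
  show dnn: "d n \<ge> 0" for n unfolding d_def using p by simp
  have dle: "d n \<le> 2 * p ^ n / (1 - p) ^ 2" for n
  proof -
    have "q n \<le> p ^ 1" unfolding q_def by (rule power_decreasing) (use p in auto)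
    then have "1 - p \<le> 1 - q n" by simp
    then have "(1 - p) ^ 2 \<le> (1 - q n) ^ 2" using p by (intro power_mono) auto
    moreover have "d n = 2 * q n / (1 - q n) ^ 2" by (simp add: d_def q_def)
    ultimately show ?thesis
      by (simp only:) (intro frac_le, use p qp[of n] q0[of n] in auto)
  qed
  show sd: "summable d"
  proof (rule summable_comparison_test'[of "\<lambda>n. 2 / (1 - p) ^ 2 * p ^ n" 0])
    show "summable (\<lambda>n. 2 / (1 - p) ^ 2 * p ^ n)" by (intro summable_mult summable_geometric) (use p in auto)
    fix n show "norm (d n) \<le> 2 / (1 - p) ^ 2 * p ^ n" using dle[of n] dnn[of n] by simp
  qed
  let ?t = "1 - cos (2 * z)"
  have t0: "?t \<ge> 0" by simp
  have c0: "convergent_prod (\<lambda>n. (1 - q n) * (1 + 2 * q n * (- cos (2 * 0)) + (q n) ^ 2))"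
    using P_conv[OF p, of 0] by (simp add: q_def)
  have cH: "convergent_prod (\<lambda>n. 1 + ?t * d n)"
  proof (rule summable_imp_convergent_prod_real)
    show "summable (\<lambda>n. \<bar>?t * d n\<bar>)" using summable_mult[OF sd, of ?t] t0 dnn by (simp add: abs_mult)
    show "?t * d n \<noteq> - 1" for n using t0 dnn[of n]
      by (metis add.commute add_eq_0_iff le_add_same_cancel1 mult_nonneg_nonneg neg_0_le_iff_le not_one_le_zero)
  qed
  have fac: "(1 - q n) * (1 + 2 * q n * (- cos (2 * z)) + (q n) ^ 2)
       = (1 - q n) * (1 + 2 * q n * (- cos (2 * 0)) + (q n) ^ 2) * (1 + ?t * d n)" for n
  proof -
    have nz: "1 - q n \<noteq> 0" using q1[of n] by simp
    have dq: "d n = 2 * q n / (1 - q n) ^ 2" by (simp add: d_def q_def)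
    have e1: "1 + 2 * q n * (- cos (2 * 0)) + (q n) ^ 2 = (1 - q n) ^ 2"
      by (simp add: power2_eq_square algebra_simps)
    have e2: "(1 - q n) ^ 2 * (1 + ?t * d n) = (1 - q n) ^ 2 + ?t * (2 * q n)"
      unfolding dq using nz by (simp add: field_simps)
    have "(1 - q n) * (1 + 2 * q n * (- cos (2 * 0)) + (q n) ^ 2) * (1 + ?t * d n)
        = (1 - q n) * ((1 - q n) ^ 2 + ?t * (2 * q n))"
      unfolding e1 e2[symmetric] by (simp only: mult.assoc)
    also have "\<dots> = (1 - q n) * (1 + 2 * q n * (- cos (2 * z)) + (q n) ^ 2)"
      by (simp add: power2_eq_square algebra_simps)
    finally show ?thesis by (rule sym)
  qed
  have qn: "\<And>n. p ^ (2 * Suc n) = q n" by (simp add: q_def)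
  have "P1 p z = (\<Prod>n. (1 - q n) * (1 + 2 * q n * (- cos (2 * 0)) + (q n) ^ 2) * (1 + ?t * d n))"
    unfolding P1_def qn fac ..
  also have "\<dots> = P1 p 0 * (\<Prod>n. 1 + ?t * d n)"
    unfolding P1_def qn by (rule prodinf_mult[OF c0 cH, symmetric])
  finally show "P1 p z = P1 p 0 * (\<Prod>n. 1 + (1 - cos (2 * z)) * d n)" .
qed

lemma prodinf_exp_bound:
  fixes d :: "nat \<Rightarrow> real" and t :: real
  assumes sd: "summable d" and dnn: "\<And>n. d n \<ge> 0" and t: "t \<ge> 0"
  shows "1 \<le> (\<Prod>n. 1 + t * d n)" and "(\<Prod>n. 1 + t * d n) \<le> exp (t * suminf d)"
proof -
  have cH: "convergent_prod (\<lambda>n. 1 + t * d n)"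
  proof (rule summable_imp_convergent_prod_real)
    show "summable (\<lambda>n. \<bar>t * d n\<bar>)" using summable_mult[OF sd, of t] t dnn by (simp add: abs_mult)
    show "t * d n \<noteq> - 1" for n using t dnn[of n]
      by (metis add.commute add_eq_0_iff le_add_same_cancel1 mult_nonneg_nonneg neg_0_le_iff_le not_one_le_zero)
  qed
  show "1 \<le> (\<Prod>n. 1 + t * d n)"
    by (rule prodinf_nonneg[OF convergent_prod_has_prod[OF cH]]) (use t dnn in simp)
  show "(\<Prod>n. 1 + t * d n) \<le> exp (t * suminf d)"
  proof (rule prodinf_le_const[OF cH, of 0])
    fix N :: nat
    have "(\<Prod>n<N. 1 + t * d n) \<le> exp (\<Sum>n<N. t * d n)"
      by (rule prod_le_exp_sum) (use t dnn in simp)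
    also have "(\<Sum>n<N. t * d n) \<le> t * suminf d"
      unfolding sum_distrib_left[symmetric] using t
      by (intro mult_left_mono sum_le_suminf[OF sd]) (auto simp: dnn)
    finally show "(\<Prod>n<N. 1 + t * d n) \<le> exp (t * suminf d)" by simp
  qed
qed

lemma P1_cont0:
  fixes p :: real
  assumes p: "0 < p" "p < 1"
  shows "((\<lambda>z. P1 p z) \<longlongrightarrow> P1 p 0) (at 0)"
proof -
  define d where "d = (\<lambda>n. 2 * p ^ (2 * Suc n) / (1 - p ^ (2 * Suc n)) ^ 2)"
  have sp: "P1 p z = P1 p 0 * (\<Prod>n. 1 + (1 - cos (2 * z)) * d n)" for z
    using P1_split(1)[OF p] unfolding d_def .
  have sd: "summable d" and dnn: "\<And>n. d n \<ge> 0" using P1_split(2,3)[OF p] unfolding d_def by auto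
  have P0: "P1 p 0 > 0" using P_pos[OF p] by simp
  show ?thesis
  proof (rule tendsto_sandwich[where f = "\<lambda>z. P1 p 0" and h = "\<lambda>z. P1 p 0 * exp ((1 - cos (2 * z)) * suminf d)"])
    show "eventually (\<lambda>z. P1 p 0 \<le> P1 p z) (at 0)"
    proof (intro always_eventually allI)
      fix z :: real
      have "1 \<le> (\<Prod>n. 1 + (1 - cos (2 * z)) * d n)"
        by (rule prodinf_exp_bound(1)[OF sd dnn]) simp
      then have "P1 p 0 * 1 \<le> P1 p 0 * (\<Prod>n. 1 + (1 - cos (2 * z)) * d n)"
        using P0 by (intro mult_left_mono) auto
      then show "P1 p 0 \<le> P1 p z" unfolding sp[of z] by simp
    qed
    show "eventually (\<lambda>z. P1 p z \<le> P1 p 0 * exp ((1 - cos (2 * z)) * suminf d)) (at 0)"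
    proof (intro always_eventually allI)
      fix z :: real
      have "(\<Prod>n. 1 + (1 - cos (2 * z)) * d n) \<le> exp ((1 - cos (2 * z)) * suminf d)"
        by (rule prodinf_exp_bound(2)[OF sd dnn]) simp
      then have "P1 p 0 * (\<Prod>n. 1 + (1 - cos (2 * z)) * d n) \<le> P1 p 0 * exp ((1 - cos (2 * z)) * suminf d)"
        using P0 by (intro mult_left_mono) auto
      then show "P1 p z \<le> P1 p 0 * exp ((1 - cos (2 * z)) * suminf d)" unfolding sp[of z] .
    qed
    show "((\<lambda>z. P1 p 0) \<longlongrightarrow> P1 p 0) (at 0)" by simp
    have "((\<lambda>z. P1 p 0 * exp ((1 - cos (2 * z)) * suminf d)) \<longlongrightarrow> P1 p 0 * exp ((1 - cos (2 * 0)) * suminf d)) (at 0)"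
      by (intro tendsto_intros)
    then show "((\<lambda>z. P1 p 0 * exp ((1 - cos (2 * z)) * suminf d)) \<longlongrightarrow> P1 p 0) (at 0)" by simp
  qed
qed

lemma theta1_deriv:
  fixes p :: real
  assumes p: "0 < p" "p < 1"
  shows "deriv (theta1 p) 0 = 2 * p powr (1/4) * P1 p 0" and "deriv (theta1 p) 0 > 0"
proof -
  have s: "((\<lambda>y::real. sin y / y) \<longlongrightarrow> 1) (at 0)"
    using DERIV_sin[of 0] by (simp add: has_field_derivative_iff)
  have "((\<lambda>y. 2 * p powr (1/4) * (sin y / y) * P1 p y) \<longlongrightarrow> 2 * p powr (1/4) * 1 * P1 p 0) (at 0)"
    by (intro tendsto_intros s P1_cont0[OF p])
  moreover have "(\<lambda>y. (theta1 p y - theta1 p 0) / (y - 0)) = (\<lambda>y. 2 * p powr (1/4) * (sin y / y) * P1 p y)"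
    by (simp add: fun_eq_iff theta1_P)
  ultimately have "((\<lambda>y. (theta1 p y - theta1 p 0) / (y - 0)) \<longlongrightarrow> 2 * p powr (1/4) * P1 p 0) (at 0)"
    by simp
  then have "(theta1 p has_field_derivative 2 * p powr (1/4) * P1 p 0) (at 0)"
    by (simp add: has_field_derivative_iff)
  then show d: "deriv (theta1 p) 0 = 2 * p powr (1/4) * P1 p 0" by (rule DERIV_imp_deriv)
  show "deriv (theta1 p) 0 > 0" unfolding d using p P_pos[OF p] by simp
qed



definition thr :: "real \<Rightarrow> nat \<Rightarrow> real \<Rightarrow> real" where
  "thr p r z = (if r = 1 then theta1 p z else if r = 2 then theta2 p z else if r = 3 then theta3 p z else theta4 p z)"

definition Kc :: "real \<Rightarrow> real \<Rightarrow> nat \<Rightarrow> real" where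
  "Kc p a r = (if r = 1 then a / 2 * deriv (theta1 p) 0 else if r = 2 then theta2 p 0
     else if r = 3 then theta3 p 0 else theta4 p 0)"

lemma brk_thr: "brk p a r z = thr p r (a / 2 * z) / Kc p a r"
  unfolding brk_def thr_def Kc_def by simp

lemma Kc_nz: "0 < p \<Longrightarrow> p < 1 \<Longrightarrow> 0 < a \<Longrightarrow> Kc p a r \<noteq> 0"
  unfolding Kc_def using theta1_deriv(2)[of p] theta_pos[of p 0] by auto

lemma ratio_K: "K \<noteq> 0 \<Longrightarrow> (a / K * (b / K)) / (c / K * (d / K)) = (a * b) / (c * d :: real)"
  by (cases "c * d = 0") (auto simp: field_simps)

lemma brk_ratio:
  assumes "Kc p a r \<noteq> 0"
  shows "brk p a r x1 * brk p a r x2 / (brk p a r x3 * brk p a r x4)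
     = thr p r (a / 2 * x1) * thr p r (a / 2 * x2) / (thr p r (a / 2 * x3) * thr p r (a / 2 * x4))"
  unfolding brk_thr by (rule ratio_K[OF assms])

lemma thr_refl: "r \<in> {1..4} \<Longrightarrow> thr p r (pi / 2 - w) = thr p (perm4 2 r) w"
  by (auto simp: thr_def perm4_def theta_refl)

lemma thr_pos:
  assumes p: "0 < p" "p < 1"
  shows "r \<in> {3, 4} \<Longrightarrow> thr p r w > 0"
    and "0 < w \<Longrightarrow> w < pi \<Longrightarrow> thr p 1 w > 0"
    and "\<bar>w\<bar> < pi / 2 \<Longrightarrow> thr p 2 w > 0"
  using theta_pos[OF p] by (auto simp: thr_def)

lemma four: "{1..4::nat} = {1, 2, 3, 4}" by auto

lemma ratio_pos: "0 < a \<Longrightarrow> 0 < b \<Longrightarrow> 0 < c \<Longrightarrow> 0 < d \<Longrightarrow> (a * b) / (c * d :: real) > 0"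
  by simp

locale ell =
  fixes p u :: real and us vs :: "nat \<Rightarrow> real" and M :: nat
  assumes p: "0 < p" "p < 1"
    and u1: "us 1 > 0" and u2: "us 2 > 0"
    and v1: "\<bar>vs 1\<bar> < us 1 + 1/2" and v2: "\<bar>vs 2\<bar> < us 2 + 1/2"
begin

definition "S = us 1 + us 2 + real M"
definition "al = alph us M"

lemma S_pos: "S > 0" using u1 u2 by (simp add: S_def)
lemma al_def': "al = pi / S" by (simp add: al_def alph_def S_def)
lemma al_pos: "al > 0" using S_pos by (simp add: al_def')
lemma alS: "al / 2 * S = pi / 2" using S_pos by (simp add: al_def')

lemma arg1: "0 < x \<Longrightarrow> x < 2 * S \<Longrightarrow> 0 < al / 2 * x \<and> al / 2 * x < pi"
  using S_pos by (auto simp: al_def' field_simps)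
lemma arg2: "\<bar>x\<bar> < S \<Longrightarrow> \<bar>al / 2 * x\<bar> < pi / 2"
  using S_pos by (auto simp: al_def' field_simps abs_mult abs_less_iff)

lemma Knz: "Kc p al r \<noteq> 0" by (rule Kc_nz[OF p al_pos])

definition cond :: "nat \<Rightarrow> real \<Rightarrow> bool" where
  "cond r x = (if r = 1 then 0 < x \<and> x < 2 * S else if r = 2 then \<bar>x\<bar> < S else True)"

lemma thr_cond: "r \<in> {1..4} \<Longrightarrow> cond r x \<Longrightarrow> thr p r (al / 2 * x) > 0"
proof -
  assume r: "r \<in> {1..4}" and c: "cond r x"
  consider "r = 1" | "r = 2" | "r \<in> {3, 4}" using r by fastforce
  then show ?thesis
  proof cases
    case 1 then show ?thesis using c arg1[of x] thr_pos(2)[OF p] by (auto simp: cond_def)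
  next
    case 2 then show ?thesis using c arg2[of x] thr_pos(3)[OF p] by (auto simp: cond_def)
  next
    case 3 then show ?thesis using thr_pos(1)[OF p] by auto
  qed
qed

lemma key_ratio:
  "r \<in> {1..4} \<Longrightarrow> cond r x1 \<Longrightarrow> cond r x2 \<Longrightarrow> cond r x3 \<Longrightarrow> cond r x4 \<Longrightarrow>
   thr p r (al / 2 * x1) * thr p r (al / 2 * x2) / (thr p r (al / 2 * x3) * thr p r (al / 2 * x4)) > 0"
  by (intro ratio_pos thr_cond)

lemma acoef_pos: "1 \<le> k \<Longrightarrow> k \<le> M \<Longrightarrow> acoef p us vs M k > 0"
proof -
  assume k: "1 \<le> k" "k \<le> M"
  have kr: "1 \<le> real k" "real k \<le> real M" using k by auto
  show ?thesis
    unfolding acoef_def Let_def al_def[symmetric] brk_ratio[OF Knz]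
  proof (rule prod_pos)
    fix r assume r: "r \<in> {1..4::nat}"
    show "0 < thr p r (al / 2 * (us 1 - us r + real k)) * thr p r (al / 2 * (us 1 - vs r - 1 / 2 + real k)) /
          (thr p r (al / 2 * (us 1 + real k)) * thr p r (al / 2 * (us 1 - 1 / 2 + real k)))"
      by (rule key_ratio[OF r]) (use r u1 u2 v1 v2 kr in \<open>auto simp: cond_def S_def abs_less_iff\<close>)
  qed
qed

lemma atcoef_pos: "1 \<le> k \<Longrightarrow> k \<le> M \<Longrightarrow> atcoef p us vs M k > 0"
proof -
  assume k: "1 \<le> k" "k \<le> M"
  have kr: "1 \<le> real k" "real k \<le> real M" using k by auto
  show ?thesis
    unfolding atcoef_def Let_def al_def[symmetric] brk_ratio[OF Knz]
  proof (rule prod_pos)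
    fix r assume r: "r \<in> {1..4::nat}"
    show "0 < thr p r (al / 2 * (us 2 - us (perm4 2 r) + real k)) * thr p r (al / 2 * (us 2 - vs (perm4 2 r) - 1 / 2 + real k)) /
          (thr p r (al / 2 * (us 2 + real k)) * thr p r (al / 2 * (us 2 - 1 / 2 + real k)))"
      by (rule key_ratio[OF r]) (use r u1 u2 v1 v2 kr in \<open>auto simp: cond_def S_def abs_less_iff perm4_def\<close>)
  qed
qed

end



lemma perm_comp: "r \<in> {1..4} \<Longrightarrow> s \<in> {1..4} \<Longrightarrow> perm4 2 (perm4 r s) = perm4 (perm4 2 r) s"
  unfolding four by (auto simp: perm4_def)

lemma perm_inv: "r \<in> {1..4} \<Longrightarrow> perm4 2 (perm4 2 r) = r"
  unfolding four by (auto simp: perm4_def)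

lemma alph_swap: "alph (us \<circ> perm4 2) M = alph us M"
  by (simp add: alph_def perm4_def)

lemma acoef_swap: "acoef p (us \<circ> perm4 2) (vs \<circ> perm4 2) M k = atcoef p us vs M k"
  unfolding acoef_def atcoef_def alph_swap by (simp add: perm4_def)

lemma atcoef_swap: "atcoef p (us \<circ> perm4 2) (vs \<circ> perm4 2) M k = acoef p us vs M k"
  unfolding acoef_def atcoef_def alph_swap Let_def
  by (rule prod.cong) (simp_all add: perm_inv, simp add: perm4_def)

lemma cr_swap: "r \<in> {1..4} \<Longrightarrow> cr p (us \<circ> perm4 2) (vs \<circ> perm4 2) M u r = cr p us vs M u (perm4 2 r)"
  unfolding cr_def alph_swap Let_def
  by (intro arg_cong2[where f = "(*)"] refl prod.cong) (simp_all add: perm_comp)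

context ell
begin

definition RT :: "nat \<Rightarrow> real \<Rightarrow> real" where
  "RT r y = thr p r (al / 2 * (y + (1/2 + u))) * thr p r (al / 2 * (y - (1/2 + u))) /
            (thr p r (al / 2 * (y + 1/2)) * thr p r (al / 2 * (y - 1/2)))"

lemma RT_refl: "r \<in> {1..4} \<Longrightarrow> RT r (S - y) = RT (perm4 2 r) y"
proof -
  assume r: "r \<in> {1..4}"
  have ep: "al / 2 * (S - y + c) = pi / 2 - al / 2 * (y - c)" for c
  proof -
    have "al / 2 * (S - y + c) = al / 2 * (S - (y - c))" by simp
    also have "\<dots> = al / 2 * S - al / 2 * (y - c)" by (rule right_diff_distrib)
    finally show ?thesis using alS by simp
  qed
  have em: "al / 2 * (S - y - c) = pi / 2 - al / 2 * (y + c)" for c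
  proof -
    have "al / 2 * (S - y - c) = al / 2 * (S - (y + c))" by simp
    also have "\<dots> = al / 2 * S - al / 2 * (y + c)" by (rule right_diff_distrib)
    finally show ?thesis using alS by simp
  qed
  show ?thesis
    unfolding RT_def ep em thr_refl[OF r]
    by (simp add: ac_simps)
qed

lemma bcoef_RT: "bcoef p us vs M u k = (\<Sum>r\<in>{1..4}. cr p us vs M u r * RT r (us 1 + real k))"
  unfolding bcoef_def Let_def al_def[symmetric]
proof (rule sum.cong)
  fix r :: nat
  show "cr p us vs M u r * (brk p al r (us 1 + real k + 1 / 2 + u) * brk p al r (us 1 + real k - 1 / 2 - u)) /
          (brk p al r (us 1 + real k + 1 / 2) * brk p al r (us 1 + real k - 1 / 2)) =
        cr p us vs M u r * RT r (us 1 + real k)"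
  proof -
    have h: "brk p al r (us 1 + real k + 1 / 2 + u) * brk p al r (us 1 + real k - 1 / 2 - u) /
          (brk p al r (us 1 + real k + 1 / 2) * brk p al r (us 1 + real k - 1 / 2)) = RT r (us 1 + real k)"
      unfolding brk_ratio[OF Knz] RT_def by (simp add: algebra_simps)
    show ?thesis using h by (metis times_divide_eq_right)
  qed
qed simp

lemma bcoef_RT': "bcoef p (us \<circ> perm4 2) (vs \<circ> perm4 2) M u k
     = (\<Sum>r\<in>{1..4}. cr p (us \<circ> perm4 2) (vs \<circ> perm4 2) M u r * RT r (us 2 + real k))"
  unfolding bcoef_def Let_def alph_swap al_def[symmetric]
proof (rule sum.cong)
  fix r :: nat
  have u1': "(us \<circ> perm4 2) 1 = us 2" by (simp add: perm4_def)
  show "cr p (us \<circ> perm4 2) (vs \<circ> perm4 2) M u r * (brk p al r ((us \<circ> perm4 2) 1 + real k + 1 / 2 + u) * brk p al r ((us \<circ> perm4 2) 1 + real k - 1 / 2 - u)) /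
          (brk p al r ((us \<circ> perm4 2) 1 + real k + 1 / 2) * brk p al r ((us \<circ> perm4 2) 1 + real k - 1 / 2)) =
        cr p (us \<circ> perm4 2) (vs \<circ> perm4 2) M u r * RT r (us 2 + real k)"
  proof -
    have h: "brk p al r (us 2 + real k + 1 / 2 + u) * brk p al r (us 2 + real k - 1 / 2 - u) /
          (brk p al r (us 2 + real k + 1 / 2) * brk p al r (us 2 + real k - 1 / 2)) = RT r (us 2 + real k)"
      unfolding brk_ratio[OF Knz] RT_def by (simp add: algebra_simps)
    show ?thesis unfolding u1' using h by (metis times_divide_eq_right)
  qed
qed simp

lemma bcoef_swap: "k \<le> M \<Longrightarrow> bcoef p (us \<circ> perm4 2) (vs \<circ> perm4 2) M u k = bcoef p us vs M u (M - k)"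
proof -
  assume k: "k \<le> M"
  let ?y = "us 2 + real k"
  have x: "us 1 + real (M - k) = S - ?y" using k by (simp add: S_def of_nat_diff)
  have "bcoef p us vs M u (M - k) = (\<Sum>r\<in>{1..4}. cr p us vs M u r * RT (perm4 2 r) ?y)"
    unfolding bcoef_RT x by (rule sum.cong) (simp_all add: RT_refl)
  moreover have "bcoef p (us \<circ> perm4 2) (vs \<circ> perm4 2) M u k = (\<Sum>r\<in>{1..4}. cr p us vs M u (perm4 2 r) * RT r ?y)"
    unfolding bcoef_RT' by (rule sum.cong) (simp_all add: cr_swap)
  ultimately show ?thesis unfolding four by (simp add: perm4_def algebra_simps)
qed

lemma Hent_swap:
  assumes i: "i \<le> M" and j: "j \<le> M"
  shows "Hent p (us \<circ> perm4 2) (vs \<circ> perm4 2) M u i j = Hent p us vs M u (M - i) (M - j)"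
proof -
  consider "i = j" | "i = j + 1" | "j = i + 1" | "i \<noteq> j" "i \<noteq> j + 1" "j \<noteq> i + 1" by blast
  then show ?thesis
  proof cases
    case 1 then show ?thesis using i by (simp add: Hent_def bcoef_swap)
  next
    case 2
    then have "M - j = M - i + 1" using i by simp
    then show ?thesis using 2 i by (simp add: Hent_def acoef_swap)
  next
    case 3
    then have "M - i = M - j + 1" using j by simp
    then show ?thesis using 3 j by (simp add: Hent_def atcoef_swap)
  next
    case 4
    then have "M - i \<noteq> M - j" "M - i \<noteq> M - j + 1" "M - j \<noteq> M - i + 1" using i j by auto
    then show ?thesis using 4 by (simp add: Hent_def)
  qed
qed

end



lemma Hent_tri: "Suc i < j \<Longrightarrow> Hent p us vs M u i j = 0 \<and> Hent p us vs M u j i = 0"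
  by (simp add: Hent_def)

lemma Hent_lo: "Hent p us vs M u (Suc k) k = acoef p us vs M (Suc k)"
  by (simp add: Hent_def)

lemma Hent_up: "Hent p us vs M u k (Suc k) = atcoef p us vs M (M - k)"
  by (simp add: Hent_def)

lemma eig_root:
  assumes "eigenvalue (mat (Suc n) (Suc n) (\<lambda>(i, j). T i j)) e"
  shows "tdet T (Suc n) e = 0"
proof -
  let ?A = "mat (Suc n) (Suc n) (\<lambda>(i, j). T i j) :: real mat"
  have A: "?A \<in> carrier_mat (Suc n) (Suc n)" by simp
  have "det (char_matrix ?A e) = 0" using assms eigenvalue_det[OF A] by simp
  then have "det (- char_matrix ?A e) = 0" using det_0_negate[of "char_matrix ?A e" "Suc n"] A by simp
  moreover have "- char_matrix ?A e = mat (Suc n) (Suc n) (\<lambda>(i, j). (if i = j then e else 0) - T i j)"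
    by (rule eq_matI) (auto simp: char_matrix_def)
  ultimately show ?thesis unfolding tdet_def by simp
qed

lemma prod_rev_index:
  fixes f :: "nat \<Rightarrow> real"
  shows "(\<Prod>j<M. f (M - j)) = (\<Prod>l\<in>{1..M}. f l)"
proof -
  have "(\<Prod>j<M. f (M - j)) = (\<Prod>j<M. (\<lambda>k. f (Suc k)) (M - Suc j))"
    by (rule prod.cong) (auto simp: Suc_diff_Suc)
  also have "\<dots> = (\<Prod>k<M. f (Suc k))" by (rule prod.nat_diff_reindex)
  also have "\<dots> = (\<Prod>l\<in>{1..M}. f l)" using prod.atLeast1_atMost_eq[of f M] by simp
  finally show ?thesis .
qed

theorem mainTheorem8:
  fixes p u :: real and us vs :: "nat \<Rightarrow> real" and M :: nat and E :: "nat \<Rightarrow> real"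
  assumes "0 < p" and "p < 1"
    and "us 1 > 0" and "us 2 > 0"
    and "\<bar>vs 1\<bar> < us 1 + 1/2" and "\<bar>vs 2\<bar> < us 2 + 1/2"
    and "\<forall>n::int. u \<noteq> 2 * pi / alph us M * of_int n"
    and "\<forall>n::int. u + 1 \<noteq> 2 * pi / alph us M * of_int n"
    and E_decr: "\<forall>i j. i < j \<longrightarrow> j \<le> M \<longrightarrow> E j < E i"
    and E_eig: "\<forall>j\<le>M. eigenvalue (Hmat p us vs M u) (E j)"
  shows "let F = Fmat p us vs M u E;
             G = diagm (M + 1) (\<lambda>l. inverse (Nrm p us vs M u E l)) * transpose_mat F
                 * diagm (M + 1) (Delta p us vs M)
         in invertible_mat F \<and> inverts_mat F G \<and> inverts_mat G F \<and>
            det F = (-1) ^ (M * (M + 1) div 2) *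
                    (\<Prod>l\<in>{0..M}. sqrt (Nrm p us vs M u E l / Delta p us vs M l))"
proof -
  interpret E: ell p u us vs M by unfold_locales (use assms in auto)
  define T where "T = Hent p us vs M u"
  define T' where "T' = Hent p (us \<circ> perm4 2) (vs \<circ> perm4 2) M u"
  interpret J: jac2 T M E T'
  proof unfold_locales
    show "\<And>i j. Suc i < j \<Longrightarrow> T i j = 0 \<and> T j i = 0" unfolding T_def by (rule Hent_tri)
    show "\<And>i j. Suc i < j \<Longrightarrow> T' i j = 0 \<and> T' j i = 0" unfolding T'_def by (rule Hent_tri)
    show "T (Suc k) k > 0" if "k < M" for k
      unfolding T_def Hent_lo using E.acoef_pos[of "Suc k"] that by simp
    show "T k (Suc k) > 0" if "k < M" for k
      unfolding T_def Hent_up using E.atcoef_pos[of "M - k"] that by simp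
    show "E j < E i" if "i < j" "j \<le> M" for i j using E_decr that by auto
    show "tdet T (Suc M) (E j) = 0" if "j \<le> M" for j
      using E_eig that eig_root[where T=T and n=M and e="E j"] unfolding Hmat_def T_def by simp
    show "T' i j = T (M - i) (M - j)" if "i \<le> M" "j \<le> M" for i j
      unfolding T_def T'_def by (rule E.Hent_swap[OF that])
  qed
  have F: "Fmat p us vs M u E = mat (M + 1) (M + 1) (\<lambda>(k, j). ff T k (E j))"
    unfolding Fmat_def fpoly_def ff_def ppoly_def tdet_def T_def
    by (rule eq_matI) (auto simp: Hent_up)
  have Acf: "J.Acf = (\<Prod>l\<in>{1..M}. acoef p us vs M l)"
    unfolding J.Acf_def by (rule prod.cong) (auto simp: T_def Hent_def)
  have eps: "epsn p us vs M u E j = ff T' M (E j)" for j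
  proof -
    have "(\<Prod>j<M. inverse (T' j (Suc j))) = (\<Prod>j<M. inverse (acoef p us vs M (M - j)))"
      unfolding T'_def Hent_up atcoef_swap ..
    also have "\<dots> = (\<Prod>l\<in>{1..M}. inverse (acoef p us vs M l))"
      by (rule prod_rev_index)
    also have "\<dots> = inverse (\<Prod>l\<in>{1..M}. acoef p us vs M l)"
      using prod_inversef[of "acoef p us vs M" "{1..M}"] by (simp add: comp_def)
    finally show ?thesis
      unfolding epsn_def ff_def ppoly_def tdet_def T'_def by (simp add: divide_inverse)
  qed
  have N: "Nrm p us vs M u E l = J.Nn l" for l
    unfolding Nrm_def J.Nn_def eps Acf ..
  have D: "Delta p us vs M = Dl T"
  proof
    fix k
    show "Delta p us vs M k = Dl T k"
      unfolding Delta_def Dl_def T_def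
    proof (rule prod.cong)
      fix l assume "l \<in> {1..k}"
      then have l: "l \<ge> 1" by simp
      then have "Hent p us vs M u (l - 1) l = atcoef p us vs M (M + 1 - l)"
        using Hent_up[of p us vs M u "l - 1"] by simp
      moreover have "Hent p us vs M u l (l - 1) = acoef p us vs M l"
        using Hent_lo[of p us vs M u "l - 1"] l by simp
      ultimately show "atcoef p us vs M (M + 1 - l) / acoef p us vs M l
          = Hent p us vs M u (l - 1) l / Hent p us vs M u l (l - 1)" by simp
    qed simp
  qed
  show ?thesis
    using J.generic_main unfolding Let_def F N D by simp
qed


end
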